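(* Let $(\mu_N)_N$ be finite signed Radon measures on $\mathbb{R}^2$ and $\mu$ a non-atomic finite signed Radon measure on $\mathbb{R}^2$. Assume $\mu_N\to\mu$ narrowly and $|\mu_N|\to\nu^d+\nu^a$ narrowly, where $\nu^d$ is non-atomic and $\nu^a=\sum_{j\ge1}\gamma_j\delta_{z_j}$ is purely atomic. Let $Q\in C^0(\mathbb{R}^2\setminus\{0\})$ be bounded, extended to $0$ by a value with $|Q(0)|\le\|Q\|_{L^\infty}$, and suppose the measures $Q(x-y)\,d\mu_N(x)\,d\mu_N(y)$ on $\mathbb{R}^2\times\mathbb{R}^2$ converge narrowly to a measure $m$. Then $$dm=Q(x-y)\,d\mu(x)\,d\mu(y)+\sum_{j\ge1}c_j\,\delta(x-z_j)\delta(y-z_j)$$ with $|c_j|\le\|Q\|_{L^\infty}|\gamma_j|^2$ for all $j$. Furthermore, if $\mu_N\ge0$ for all $N$, then $dm=Q(x-y)\,d\mu(x)\,d\mu(y)$.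
   Context: $|\mu_N|$ is the variation measure. Narrow convergence: convergence against bounded continuous test functions. Since $\mu$ is non-atomic, the diagonal $\{x=y\}$ is $\mu\otimes\mu$-null, so $Q(x-y)\,d\mu\,d\mu$ does not depend on the value of $Q(0)$. *)

theory Defs
  imports "HOL-Analysis.Analysis"
begin

text \<open>A finite signed Borel (= Radon, on R^2) measure is represented by its Jordan
decomposition (P, M): two finite Borel measures that are mutually singular.
The measure is P - M and its variation measure is P + M.\<close>

definition signed_meas :: "'a::topological_space measure \<times> 'a measure \<Rightarrow> bool" where
  "signed_meas \<mu> \<longleftrightarrow>
     sets (fst \<mu>) = sets borel \<and> sets (snd \<mu>) = sets borel \<and>
     finite_measure (fst \<mu>) \<and> finite_measure (snd \<mu>) \<and>
     (\<exists>A\<in>sets borel. emeasure (fst \<mu>) A = 0 \<and> emeasure (snd \<mu>) (UNIV - A) = 0)"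

definition smeas :: "'a measure \<times> 'a measure \<Rightarrow> 'a set \<Rightarrow> real" where
  "smeas \<mu> A = measure (fst \<mu>) A - measure (snd \<mu>) A"

definition sint :: "'a measure \<times> 'a measure \<Rightarrow> ('a \<Rightarrow> real) \<Rightarrow> real" where
  "sint \<mu> f = (\<integral>x. f x \<partial>fst \<mu>) - (\<integral>x. f x \<partial>snd \<mu>)"

definition var_int :: "'a measure \<times> 'a measure \<Rightarrow> ('a \<Rightarrow> real) \<Rightarrow> real" where
  "var_int \<mu> f = (\<integral>x. f x \<partial>fst \<mu>) + (\<integral>x. f x \<partial>snd \<mu>)"

definition sint2 :: "'a measure \<times> 'a measure \<Rightarrow> ('a \<times> 'a \<Rightarrow> real) \<Rightarrow> real" where
  "sint2 \<mu> g =
     (\<integral>p. g p \<partial>(fst \<mu> \<Otimes>\<^sub>M fst \<mu>)) - (\<integral>p. g p \<partial>(fst \<mu> \<Otimes>\<^sub>M snd \<mu>))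
   - (\<integral>p. g p \<partial>(snd \<mu> \<Otimes>\<^sub>M fst \<mu>)) + (\<integral>p. g p \<partial>(snd \<mu> \<Otimes>\<^sub>M snd \<mu>))"

definition s_nonatomic :: "'a measure \<times> 'a measure \<Rightarrow> bool" where
  "s_nonatomic \<mu> \<longleftrightarrow> (\<forall>x. emeasure (fst \<mu>) {x} = 0 \<and> emeasure (snd \<mu>) {x} = 0)"

definition bcont :: "('a::topological_space \<Rightarrow> real) \<Rightarrow> bool" where
  "bcont f \<longleftrightarrow> continuous_on UNIV f \<and> bounded (range f)"

definition Qnorm :: "(real^2 \<Rightarrow> real) \<Rightarrow> real" where
  "Qnorm Q = (SUP x\<in>-{0}. \<bar>Q x\<bar>)"

end

theory Submission
  imports Defs
begin



definition fmeas :: "'a::topological_space measure \<Rightarrow> bool" where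
  "fmeas M \<longleftrightarrow> sets M = sets borel \<and> finite_measure M"

lemma fmeas_meas: "fmeas M \<Longrightarrow> f \<in> borel_measurable borel \<Longrightarrow> f \<in> borel_measurable M"
  unfolding fmeas_def using measurable_cong_sets[of M borel borel borel] by auto

lemma fmeas_integrable:
  assumes "fmeas M" "f \<in> borel_measurable borel" "\<And>x. \<bar>f x\<bar> \<le> B"
  shows "integrable M (f::_ \<Rightarrow> real)"
proof -
  interpret finite_measure M using assms(1) by (simp add: fmeas_def)
  have m: "f \<in> borel_measurable M" using assms(1,2) by (rule fmeas_meas)
  have "AE x in M. norm (f x) \<le> B" using assms(3) by simp
  then show ?thesis using m by (rule integrable_const_bound)
qed

lemma fmeas_pair:
  fixes A :: "'a::second_countable_topology measure" and B :: "'b::second_countable_topology measure"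
  assumes "fmeas A" "fmeas B" shows "fmeas (A \<Otimes>\<^sub>M B)"
proof -
  have "sets (A \<Otimes>\<^sub>M B) = sets (borel \<Otimes>\<^sub>M borel)"
    using assms by (intro sets_pair_measure_cong) (simp_all add: fmeas_def)
  then have "sets (A \<Otimes>\<^sub>M B) = sets borel" using borel_prod[where 'a='a and 'b='b] by metis
  moreover have "finite_measure (A \<Otimes>\<^sub>M B)"
    using assms by (intro finite_measure_pair_measure) (simp_all add: fmeas_def)
  ultimately show ?thesis by (simp add: fmeas_def)
qed



definition sepf :: "('a::topological_space \<times> 'b::topological_space \<Rightarrow> real) \<Rightarrow> bool" where
  "sepf p \<longleftrightarrow> (\<exists>F (a::nat \<Rightarrow> 'a \<Rightarrow> real) (b::nat \<Rightarrow> 'b \<Rightarrow> real).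
     finite F \<and> (\<forall>i. continuous_on UNIV (a i) \<and> continuous_on UNIV (b i)) \<and>
     (\<forall>x y. p (x, y) = (\<Sum>i\<in>F. a i x * b i y)))"

lemma cont_if_const: "continuous_on S f \<Longrightarrow> continuous_on S g \<Longrightarrow> continuous_on S (\<lambda>x. if P then f x else g x)"
  by (cases P) auto

lemma sepf_const: "sepf (\<lambda>p. c)"
  unfolding sepf_def
  by (rule exI[of _ "{0}"], rule exI[of _ "\<lambda>i x. c"], rule exI[of _ "\<lambda>i y. 1"]) auto

lemma sepf_linear:
  fixes f :: "'a::real_normed_vector \<times> 'b::real_normed_vector \<Rightarrow> real"
  assumes f: "bounded_linear f" shows "sepf f"
proof -
  interpret bounded_linear f by fact
  have eq: "f (x, y) = f (x, 0) + f (0, y)" for x y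
    using add[of "(x,0)" "(0,y)"] by simp
  have c1: "continuous_on UNIV (\<lambda>x. f (x, 0::'b))"
    by (intro continuous_on_compose2[OF linear_continuous_on[OF f]] continuous_intros) auto
  have c2: "continuous_on UNIV (\<lambda>y. f (0::'a, y))"
    by (intro continuous_on_compose2[OF linear_continuous_on[OF f]] continuous_intros) auto
  show ?thesis unfolding sepf_def
    apply (rule exI[of _ "{0,1}"])
    apply (rule exI[of _ "\<lambda>i x. if i = 0 then f (x, 0) else 1"])
    apply (rule exI[of _ "\<lambda>i y. if i = 0 then 1 else f (0, y)"])
    using c1 c2 
    by (auto intro: eq intro!: cont_if_const)
qed

lemma sepf_add:
  fixes p q :: "'a::topological_space \<times> 'b::topological_space \<Rightarrow> real"
  assumes "sepf p" "sepf q" shows "sepf (\<lambda>z. p z + q z)"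
proof -
  obtain F and a :: "nat \<Rightarrow> 'a \<Rightarrow> real" and b :: "nat \<Rightarrow> 'b \<Rightarrow> real" where F: "finite F" "\<And>i. continuous_on UNIV (a i) \<and> continuous_on UNIV (b i)"
    "\<And>x y. p (x, y) = (\<Sum>i\<in>F. a i x * b i y)" using assms(1) unfolding sepf_def by blast
  obtain G and c :: "nat \<Rightarrow> 'a \<Rightarrow> real" and d :: "nat \<Rightarrow> 'b \<Rightarrow> real" where G: "finite G" "\<And>i. continuous_on UNIV (c i) \<and> continuous_on UNIV (d i)"
    "\<And>x y. q (x, y) = (\<Sum>i\<in>G. c i x * d i y)" using assms(2) unfolding sepf_def by blast
  define A where "A = (\<lambda>i. if even i then a (i div 2) else c (i div 2))"
  define B where "B = (\<lambda>i. if even i then b (i div 2) else d (i div 2))"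
  have disj: "(\<lambda>i. 2*i) ` F \<inter> (\<lambda>i. 2*i+1) ` G = {}"
  proof -
    have "2*i \<noteq> 2*j+(1::nat)" for i j by presburger
    then show ?thesis by blast
  qed
  have inj1: "inj_on (\<lambda>i::nat. 2*i) F" by (auto simp: inj_on_def)
  have inj2: "inj_on (\<lambda>i::nat. 2*i+1) G" by (auto simp: inj_on_def)
  have e: "(\<Sum>i\<in>(\<lambda>i. 2*i) ` F \<union> (\<lambda>i. 2*i+1) ` G. A i x * B i y) = p (x,y) + q (x,y)" for x y
  proof -
    have "(\<Sum>i\<in>(\<lambda>i. 2*i) ` F \<union> (\<lambda>i. 2*i+1) ` G. A i x * B i y) =
       (\<Sum>i\<in>(\<lambda>i. 2*i) ` F. A i x * B i y) + (\<Sum>i\<in>(\<lambda>i. 2*i+1) ` G. A i x * B i y)"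
      by (rule sum.union_disjoint) (use F G disj in auto)
    also have "(\<Sum>i\<in>(\<lambda>i. 2*i) ` F. A i x * B i y) = (\<Sum>i\<in>F. a i x * b i y)"
      by (subst sum.reindex[OF inj1]) (simp add: A_def B_def)
    also have "(\<Sum>i\<in>(\<lambda>i. 2*i+1) ` G. A i x * B i y) = (\<Sum>i\<in>G. c i x * d i y)"
      by (subst sum.reindex[OF inj2]) (simp add: A_def B_def)
    finally show ?thesis by (simp only: F(3) G(3))
  qed
  moreover have c: "continuous_on UNIV (A i) \<and> continuous_on UNIV (B i)" for i
    using F(2)[of "i div 2"] G(2)[of "i div 2"] unfolding A_def B_def by (cases "even i") auto
  have f: "finite ((\<lambda>i. 2*i) ` F \<union> (\<lambda>i. 2*i+1) ` G)" using F G by simp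
  show ?thesis unfolding sepf_def
    by (rule exI[of _ "(\<lambda>i. 2*i) ` F \<union> (\<lambda>i. 2*i+1) ` G"], rule exI[of _ A], rule exI[of _ B])
      (use e c f in simp)
qed

lemma sepf_mult:
  fixes p q :: "'a::topological_space \<times> 'b::topological_space \<Rightarrow> real"
  assumes "sepf p" "sepf q" shows "sepf (\<lambda>z. p z * q z)"
proof -
  obtain F and a :: "nat \<Rightarrow> 'a \<Rightarrow> real" and b :: "nat \<Rightarrow> 'b \<Rightarrow> real" where F: "finite F" "\<And>i. continuous_on UNIV (a i) \<and> continuous_on UNIV (b i)"
    "\<And>x y. p (x, y) = (\<Sum>i\<in>F. a i x * b i y)" using assms(1) unfolding sepf_def by blast
  obtain G and c :: "nat \<Rightarrow> 'a \<Rightarrow> real" and d :: "nat \<Rightarrow> 'b \<Rightarrow> real" where G: "finite G" "\<And>i. continuous_on UNIV (c i) \<and> continuous_on UNIV (d i)"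
    "\<And>x y. q (x, y) = (\<Sum>i\<in>G. c i x * d i y)" using assms(2) unfolding sepf_def by blast
  define A where "A = (\<lambda>k x. a (fst (prod_decode k)) x * c (snd (prod_decode k)) x)"
  define B where "B = (\<lambda>k y. b (fst (prod_decode k)) y * d (snd (prod_decode k)) y)"
  have e: "(\<Sum>k\<in>prod_encode ` (F \<times> G). A k x * B k y) = p (x,y) * q (x,y)" for x y
  proof -
    have "(\<Sum>k\<in>prod_encode ` (F \<times> G). A k x * B k y) = (\<Sum>ij\<in>F \<times> G. A (prod_encode ij) x * B (prod_encode ij) y)"
      by (subst sum.reindex[OF inj_prod_encode]) (simp add: o_def)
    also have "\<dots> = (\<Sum>ij\<in>F \<times> G. (\<lambda>i j. a i x * b i y * (c j x * d j y)) (fst ij) (snd ij))"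
      by (rule sum.cong) (auto simp: A_def B_def mult_ac)
    also have "\<dots> = (\<Sum>i\<in>F. \<Sum>j\<in>G. a i x * b i y * (c j x * d j y))"
      by (subst sum.cartesian_product) (simp add: case_prod_beta')
    also have "\<dots> = (\<Sum>i\<in>F. a i x * b i y) * (\<Sum>j\<in>G. c j x * d j y)"
      by (rule sum_product[symmetric])
    also have "\<dots> = p (x,y) * q (x,y)" by (simp only: F(3) G(3))
    finally show ?thesis .
  qed
  moreover have c: "continuous_on UNIV (A i) \<and> continuous_on UNIV (B i)" for i
    using F(2)[of "fst (prod_decode i)"] G(2)[of "snd (prod_decode i)"] unfolding A_def B_def
    by (auto intro!: continuous_on_mult)
  have f: "finite (prod_encode ` (F \<times> G))" using F G by simp
  show ?thesis unfolding sepf_def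
    by (rule exI[of _ "prod_encode ` (F \<times> G)"], rule exI[of _ A], rule exI[of _ B])
      (use e c f in simp)
qed

lemma sepf_poly:
  fixes p :: "'a::real_normed_vector \<times> 'b::real_normed_vector \<Rightarrow> real"
  assumes "real_polynomial_function p" shows "sepf p"
  using assms
proof induction
  case (linear f) then show ?case by (rule sepf_linear)
next
  case (const c) then show ?case by (rule sepf_const)
next
  case (add f g) then show ?case using sepf_add by blast
next
  case (mult f g) then show ?case using sepf_mult by blast
qed



definition bmeas :: "('a::topological_space \<Rightarrow> real) \<Rightarrow> bool" where
  "bmeas f \<longleftrightarrow> f \<in> borel_measurable borel \<and> (\<exists>B. \<forall>x. \<bar>f x\<bar> \<le> B)"

lemma bmeasI: "f \<in> borel_measurable borel \<Longrightarrow> (\<And>x. \<bar>f x\<bar> \<le> B) \<Longrightarrow> bmeas f"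
  unfolding bmeas_def by blast

lemma bcont_bmeas: "bcont f \<Longrightarrow> bmeas f"
  unfolding bcont_def bmeas_def
  by (auto intro: borel_measurable_continuous_onI simp: bounded_real)

lemma bmeas_integrable: "fmeas M \<Longrightarrow> bmeas f \<Longrightarrow> integrable M f"
  unfolding bmeas_def using fmeas_integrable by blast

lemma bmeas_add: "bmeas f \<Longrightarrow> bmeas g \<Longrightarrow> bmeas (\<lambda>x. f x + g x)"
  unfolding bmeas_def
proof (elim conjE exE, intro conjI)
  fix B1 B2 assume a: "\<forall>x. \<bar>f x\<bar> \<le> B1" "\<forall>x. \<bar>g x\<bar> \<le> B2"
  show "\<exists>B. \<forall>x. \<bar>f x + g x\<bar> \<le> B"
  proof (intro exI[of _ "B1+B2"] allI)
    fix x show "\<bar>f x + g x\<bar> \<le> B1 + B2" using a[rule_format, of x] abs_triangle_ineq[of "f x" "g x"] by linarith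
  qed
qed auto

lemma bmeas_diff: "bmeas f \<Longrightarrow> bmeas g \<Longrightarrow> bmeas (\<lambda>x. f x - g x)"
  unfolding bmeas_def
proof (elim conjE exE, intro conjI)
  fix B1 B2 assume a: "\<forall>x. \<bar>f x\<bar> \<le> B1" "\<forall>x. \<bar>g x\<bar> \<le> B2"
  show "\<exists>B. \<forall>x. \<bar>f x - g x\<bar> \<le> B"
  proof (intro exI[of _ "B1+B2"] allI)
    fix x show "\<bar>f x - g x\<bar> \<le> B1 + B2" using a[rule_format, of x] abs_triangle_ineq4[of "f x" "g x"] by linarith
  qed
qed auto

lemma bmeas_mult: "bmeas f \<Longrightarrow> bmeas g \<Longrightarrow> bmeas (\<lambda>x. f x * g x)"
  unfolding bmeas_def
proof (elim conjE exE, intro conjI)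
  fix B1 B2 assume a: "\<forall>x. \<bar>f x\<bar> \<le> B1" "\<forall>x. \<bar>g x\<bar> \<le> B2"
  show "\<exists>B. \<forall>x. \<bar>f x * g x\<bar> \<le> B"
  proof (intro exI[of _ "B1*B2"] allI)
    fix x show "\<bar>f x * g x\<bar> \<le> B1 * B2"
      using a[rule_format, of x] by (simp add: abs_mult mult_mono')
  qed
qed auto

lemma bmeas_const: "bmeas (\<lambda>x. c)"
  by (rule bmeasI[of _ "\<bar>c\<bar>"]) auto

lemma bmeas_abs: "bmeas f \<Longrightarrow> bmeas (\<lambda>x. \<bar>f x\<bar>)"
  unfolding bmeas_def by auto

lemma bmeas_indicator: "A \<in> sets borel \<Longrightarrow> bmeas (indicator A :: _ \<Rightarrow> real)"
  by (rule bmeasI[of _ 1]) (auto simp: indicator_def)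

lemma bmeas_fst:
  "bmeas (f::'a::second_countable_topology \<Rightarrow> real) \<Longrightarrow> bmeas (\<lambda>p::'a \<times> 'b::second_countable_topology. f (fst p))"
  unfolding bmeas_def
proof (elim conjE exE, intro conjI)
  assume "f \<in> borel_measurable borel"
  then have "(\<lambda>p::'a \<times> 'b. f (fst p)) \<in> borel_measurable (borel \<Otimes>\<^sub>M borel)" by measurable
  then show "(\<lambda>p::'a \<times> 'b. f (fst p)) \<in> borel_measurable borel" by (simp add: borel_prod)
qed auto

lemma bmeas_snd:
  "bmeas (f::'b::second_countable_topology \<Rightarrow> real) \<Longrightarrow> bmeas (\<lambda>p::'a::second_countable_topology \<times> 'b. f (snd p))"
  unfolding bmeas_def
proof (elim conjE exE, intro conjI)
  assume "f \<in> borel_measurable borel"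
  then have "(\<lambda>p::'a \<times> 'b. f (snd p)) \<in> borel_measurable (borel \<Otimes>\<^sub>M borel)" by measurable
  then show "(\<lambda>p::'a \<times> 'b. f (snd p)) \<in> borel_measurable borel" by (simp add: borel_prod)
qed auto

lemma int_prod_factor:
  fixes A :: "'a::second_countable_topology measure" and B :: "'b::second_countable_topology measure"
  assumes A: "fmeas A" and B: "fmeas B" and a: "bmeas a" and b: "bmeas b"
  shows "(\<integral>p. a (fst p) * b (snd p) \<partial>(A \<Otimes>\<^sub>M B)) = integral\<^sup>L A a * integral\<^sup>L B b"
proof -
  interpret A: finite_measure A using A by (simp add: fmeas_def)
  interpret B: finite_measure B using B by (simp add: fmeas_def)
  interpret pair_sigma_finite A B ..
  have i: "integrable (A \<Otimes>\<^sub>M B) (\<lambda>p. a (fst p) * b (snd p))"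
    by (intro bmeas_integrable fmeas_pair A B bmeas_mult bmeas_fst bmeas_snd a b)
  have "integral\<^sup>L (A \<Otimes>\<^sub>M B) (\<lambda>(x, y). a x * b y) = (\<integral>x. (\<integral>y. a x * b y \<partial>B) \<partial>A)"
    by (rule integral_fst[symmetric]) (use i in \<open>simp add: case_prod_beta'\<close>)
  also have "\<dots> = integral\<^sup>L A a * integral\<^sup>L B b" by simp
  finally show ?thesis by (simp add: case_prod_beta')
qed

definition I :: "real \<Rightarrow> 'a measure \<Rightarrow> 'a measure \<Rightarrow> ('a \<Rightarrow> real) \<Rightarrow> real" where
  "I s P M f = integral\<^sup>L P f + s * integral\<^sup>L M f"

definition I2 :: "real \<Rightarrow> 'a measure \<Rightarrow> 'a measure \<Rightarrow> ('a \<times> 'a \<Rightarrow> real) \<Rightarrow> real" where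
  "I2 s P M g = integral\<^sup>L (P \<Otimes>\<^sub>M P) g + s * integral\<^sup>L (P \<Otimes>\<^sub>M M) g
     + s * integral\<^sup>L (M \<Otimes>\<^sub>M P) g + integral\<^sup>L (M \<Otimes>\<^sub>M M) g"

lemma sint_I: "sint \<mu> f = I (-1) (fst \<mu>) (snd \<mu>) f"
  unfolding sint_def I_def by simp
lemma var_int_I: "var_int \<mu> f = I 1 (fst \<mu>) (snd \<mu>) f"
  unfolding var_int_def I_def by simp
lemma sint2_I2: "sint2 \<mu> g = I2 (-1) (fst \<mu>) (snd \<mu>) g"
  unfolding sint2_def I2_def by simp

lemma I2_prod:
  fixes P M :: "'a::second_countable_topology measure"
  assumes "fmeas P" "fmeas M" "s * s = 1" "bmeas a" "bmeas b"
  shows "I2 s P M (\<lambda>p. a (fst p) * b (snd p)) = I s P M a * I s P M b"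
  unfolding I2_def I_def using assms
  by (simp add: int_prod_factor algebra_simps)

lemma I2_sepsum:
  fixes P M :: "'a::second_countable_topology measure"
  assumes P: "fmeas P" and M: "fmeas M" and s: "s * s = 1" and ab: "\<And>i. i \<in> F \<Longrightarrow> bmeas (a i) \<and> bmeas (b i)"
  shows "I2 s P M (\<lambda>p. \<Sum>i\<in>F. a i (fst p) * b i (snd p)) = (\<Sum>i\<in>F. I s P M (a i) * I s P M (b i))"
proof -
  have int: "integrable (X \<Otimes>\<^sub>M Y) (\<lambda>p. a i (fst p) * b i (snd p))" if "fmeas X" "fmeas Y" "i \<in> F"
    for X Y :: "'a measure" and i
    using that ab by (intro bmeas_integrable fmeas_pair bmeas_mult bmeas_fst bmeas_snd) auto
  have "I2 s P M (\<lambda>p. \<Sum>i\<in>F. a i (fst p) * b i (snd p)) = (\<Sum>i\<in>F. I2 s P M (\<lambda>p. a i (fst p) * b i (snd p)))"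
  proof -
    have e: "integral\<^sup>L (X \<Otimes>\<^sub>M Y) (\<lambda>p. \<Sum>i\<in>F. a i (fst p) * b i (snd p)) =
      (\<Sum>i\<in>F. integral\<^sup>L (X \<Otimes>\<^sub>M Y) (\<lambda>p. a i (fst p) * b i (snd p)))" if "fmeas X" "fmeas Y" for X Y
      using Bochner_Integration.integral_sum[where f="\<lambda>i p. a i (fst p) * b i (snd p)" and I=F] int[OF that] by simp
    show ?thesis unfolding I2_def by (simp add: e P M sum.distrib sum_distrib_left)
  qed
  also have "\<dots> = (\<Sum>i\<in>F. I s P M (a i) * I s P M (b i))"
    by (rule sum.cong) (use ab in \<open>auto intro!: I2_prod P M s\<close>)
  finally show ?thesis .
qed

lemma I_add: "fmeas P \<Longrightarrow> fmeas M \<Longrightarrow> bmeas f \<Longrightarrow> bmeas g \<Longrightarrow> I s P M (\<lambda>x. f x + g x) = I s P M f + I s P M g"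
  unfolding I_def by (simp add: bmeas_integrable algebra_simps)
lemma I_diff: "fmeas P \<Longrightarrow> fmeas M \<Longrightarrow> bmeas f \<Longrightarrow> bmeas g \<Longrightarrow> I s P M (\<lambda>x. f x - g x) = I s P M f - I s P M g"
  unfolding I_def by (simp add: bmeas_integrable algebra_simps)
lemma I_cmult: "I s P M (\<lambda>x. c * f x) = c * I s P M f"
  unfolding I_def by (simp add: algebra_simps)

lemma I2_add:
  fixes P M :: "'a::second_countable_topology measure"
  shows "fmeas P \<Longrightarrow> fmeas M \<Longrightarrow> bmeas f \<Longrightarrow> bmeas g \<Longrightarrow> I2 s P M (\<lambda>x. f x + g x) = I2 s P M f + I2 s P M g"
  unfolding I2_def by (simp add: bmeas_integrable fmeas_pair algebra_simps)
lemma I2_diff: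
  fixes P M :: "'a::second_countable_topology measure"
  shows "fmeas P \<Longrightarrow> fmeas M \<Longrightarrow> bmeas f \<Longrightarrow> bmeas g \<Longrightarrow> I2 s P M (\<lambda>x. f x - g x) = I2 s P M f - I2 s P M g"
  unfolding I2_def by (simp add: bmeas_integrable fmeas_pair algebra_simps)
lemma I2_cmult: "I2 s P M (\<lambda>x. c * f x) = c * I2 s P M f"
  unfolding I2_def by (simp add: algebra_simps)

lemma int_abs_le:
  assumes "fmeas A" "bmeas f" "bmeas g" "\<And>x. \<bar>f x\<bar> \<le> g x"
  shows "\<bar>integral\<^sup>L A f\<bar> \<le> integral\<^sup>L A g"
proof -
  have i: "integrable A f" "integrable A g" using assms by (auto intro: bmeas_integrable)
  have "integral\<^sup>L A f \<le> integral\<^sup>L A g"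
  proof (rule integral_mono[OF i])
    fix x show "f x \<le> g x" using assms(4)[of x] abs_ge_self[of "f x"] by linarith
  qed
  moreover have "integral\<^sup>L A (\<lambda>x. - f x) \<le> integral\<^sup>L A g"
  proof (rule integral_mono[OF integrable_minus[OF i(1)] i(2)])
    fix x show "- f x \<le> g x" using assms(4)[of x] abs_ge_minus_self[of "f x"] by linarith
  qed
  then have "- integral\<^sup>L A f \<le> integral\<^sup>L A g" by simp
  ultimately show ?thesis by linarith
qed

lemma int_nonneg:
  assumes "\<And>x. 0 \<le> g x" shows "0 \<le> integral\<^sup>L A (g::_ \<Rightarrow> real)"
  using assms by (simp add: integral_nonneg)

lemma I2_abs_le:
  fixes P M :: "'a::second_countable_topology measure"
  assumes "fmeas P" "fmeas M" "s * s = 1" "bmeas f" "bmeas g" "\<And>x. \<bar>f x\<bar> \<le> g x"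
  shows "\<bar>I2 s P M f\<bar> \<le> I2 1 P M g"
proof -
  have "(s - 1) * (s + 1) = 0" using assms(3) by (simp add: algebra_simps)
  then have "s = 1 \<or> s = -1" by auto
  then have s: "\<bar>s\<bar> = 1" by auto
  have a: "\<bar>integral\<^sup>L (X \<Otimes>\<^sub>M Y) f\<bar> \<le> integral\<^sup>L (X \<Otimes>\<^sub>M Y) g" if "fmeas X" "fmeas Y" for X Y :: "'a measure"
    using that assms by (intro int_abs_le fmeas_pair) auto
  have "\<bar>I2 s P M f\<bar> \<le> \<bar>integral\<^sup>L (P \<Otimes>\<^sub>M P) f\<bar> + \<bar>s\<bar> * \<bar>integral\<^sup>L (P \<Otimes>\<^sub>M M) f\<bar>
     + \<bar>s\<bar> * \<bar>integral\<^sup>L (M \<Otimes>\<^sub>M P) f\<bar> + \<bar>integral\<^sup>L (M \<Otimes>\<^sub>M M) f\<bar>"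
    unfolding I2_def abs_mult[symmetric] by (intro order.trans[OF abs_triangle_ineq] add_mono order_refl)
  also have "\<dots> \<le> I2 1 P M g" unfolding I2_def s mult_1
    using a[of P P] a[of P M] a[of M P] a[of M M] assms(1,2) by (intro add_mono) auto
  finally show ?thesis .
qed



lemma fmeas_space: "fmeas M \<Longrightarrow> space M = UNIV"
  unfolding fmeas_def by (metis sets_eq_imp_space_eq space_borel)

lemma fmeas_sets: "fmeas M \<Longrightarrow> A \<in> sets borel \<Longrightarrow> A \<in> sets M"
  unfolding fmeas_def by simp

lemma fmeas_mono: "fmeas M \<Longrightarrow> A \<subseteq> B \<Longrightarrow> B \<in> sets borel \<Longrightarrow> measure M A \<le> measure M B"
  using finite_measure.finite_measure_mono[of M A B] unfolding fmeas_def by simp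

lemma int_const_fm: "fmeas M \<Longrightarrow> integral\<^sup>L M (\<lambda>x. c) = measure M UNIV * c"
  by (simp add: fmeas_space)

lemma int_ind_fm: "fmeas M \<Longrightarrow> integral\<^sup>L M (indicator A :: _ \<Rightarrow> real) = measure M A"
  by (simp add: fmeas_space)

lemma I2_approx:
  fixes P M :: "'a::second_countable_topology measure"
  assumes P: "fmeas P" and M: "fmeas M" and s: "s * s = 1" and g: "bmeas g" and h: "bmeas h"
    and K: "K \<in> sets borel" and e: "0 \<le> e" and c: "0 \<le> c"
    and bd: "\<And>z. \<bar>g z - h z\<bar> \<le> e + c * (indicator (-K) (fst z) + indicator (-K) (snd z))"
  shows "\<bar>I2 s P M g - I2 s P M h\<bar> \<le>
    e * (measure P UNIV + measure M UNIV)^2 + 2 * c * (measure P (-K) + measure M (-K)) * (measure P UNIV + measure M UNIV)"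
proof -
  define X where "X = (\<lambda>z::'a\<times>'a. (\<lambda>x. 1::real) (fst z) * (\<lambda>y. 1::real) (snd z))"
  define Y where "Y = (\<lambda>z::'a\<times>'a. indicator (-K) (fst z) * (\<lambda>y. 1::real) (snd z))"
  define W where "W = (\<lambda>z::'a\<times>'a. (\<lambda>x. 1::real) (fst z) * indicator (-K) (snd z))"
  define k where "k = (\<lambda>z. e * X z + c * Y z + c * W z)"
  have bK: "bmeas (indicator (-K) :: 'a \<Rightarrow> real)" using K by (intro bmeas_indicator) auto
  have b1: "bmeas X" unfolding X_def
    by (intro bmeas_mult bmeas_fst bmeas_snd bmeas_const)
  have b2: "bmeas Y" unfolding Y_def
    by (intro bmeas_mult bmeas_fst bmeas_snd bmeas_const bK)
  have b3: "bmeas W" unfolding W_def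
    by (intro bmeas_mult bmeas_fst bmeas_snd bmeas_const bK)
  have b1': "bmeas (\<lambda>z. e * X z)" by (intro bmeas_mult bmeas_const b1)
  have b2': "bmeas (\<lambda>z. c * Y z)" by (intro bmeas_mult bmeas_const b2)
  have b3': "bmeas (\<lambda>z. c * W z)" by (intro bmeas_mult bmeas_const b3)
  have b12: "bmeas (\<lambda>z. e * X z + c * Y z)" by (intro bmeas_add b1' b2')
  have bk: "bmeas k" unfolding k_def by (intro bmeas_add b12 b3')
  have "\<bar>I2 s P M g - I2 s P M h\<bar> = \<bar>I2 s P M (\<lambda>z. g z - h z)\<bar>"
    using I2_diff[OF P M g h] by simp
  also have "\<dots> \<le> I2 1 P M k"
  proof (rule I2_abs_le[OF P M s bmeas_diff[OF g h] bk])
    fix z show "\<bar>g z - h z\<bar> \<le> k z" unfolding k_def X_def Y_def W_def using bd[of z] by (simp add: algebra_simps)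
  qed
  also have "I2 1 P M k = e * I2 1 P M X + c * I2 1 P M Y + c * I2 1 P M W"
    unfolding k_def I2_add[OF P M b12 b3'] I2_add[OF P M b1' b2'] I2_cmult by simp
  also have "\<dots> = e * (I 1 P M (\<lambda>x. 1) * I 1 P M (\<lambda>x. 1)) + c * (I 1 P M (indicator (-K)) * I 1 P M (\<lambda>x. 1))
      + c * (I 1 P M (\<lambda>x. 1) * I 1 P M (indicator (-K)))"
    unfolding X_def Y_def W_def
    by (simp only: I2_prod[OF P M _ bmeas_const bmeas_const] I2_prod[OF P M _ bK bmeas_const]
        I2_prod[OF P M _ bmeas_const bK])
  also have "\<dots> = e * (measure P UNIV + measure M UNIV)^2 + 2 * c * (measure P (-K) + measure M (-K)) * (measure P UNIV + measure M UNIV)"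
    unfolding I_def by (simp add: fmeas_space[OF P] fmeas_space[OF M] power2_eq_square algebra_simps)
  finally show ?thesis .
qed

lemma tight_single:
  fixes M :: "'a::real_normed_vector measure"
  assumes M: "fmeas M" and e: "0 < e"
  shows "\<exists>R. measure M (- cball 0 R) < e"
proof -
  interpret finite_measure M using M by (simp add: fmeas_def)
  have "(\<lambda>n. measure M (- cball 0 (real n))) \<longlonglongrightarrow> measure M (\<Inter>n. - cball 0 (real n))"
  proof (rule finite_Lim_measure_decseq)
    have "sets M = sets borel" using M by (simp add: fmeas_def)
    moreover have "- cball (0::'a) (real n) \<in> sets borel" for n by (intro borel_comp borel_closed closed_cball)
    ultimately show "range (\<lambda>n. - cball 0 (real n)) \<subseteq> sets M" by blast
    show "decseq (\<lambda>n. - cball (0::'a) (real n))" unfolding decseq_def by auto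
  qed
  moreover have "(\<Inter>n. - cball (0::'a) (real n)) = {}"
  proof -
    have "x \<notin> (\<Inter>n. - cball 0 (real n))" for x :: 'a
    proof -
      obtain n where "norm x \<le> real n" using real_arch_simple by blast
      then show ?thesis by auto
    qed
    then show ?thesis by blast
  qed
  ultimately have "(\<lambda>n. measure M (- cball 0 (real n))) \<longlonglongrightarrow> 0" by simp
  from LIMSEQ_D[OF this e] obtain no where "\<forall>n\<ge>no. norm (measure M (- cball 0 (real n)) - 0) < e" by blast
  then have "measure M (- cball 0 (real no)) < e" by auto
  then show ?thesis by blast
qed

definition cut :: "real \<Rightarrow> 'a::real_normed_vector \<Rightarrow> real" where
  "cut R x = max 0 (min 1 (R + 1 - norm x))"

lemma cut_cont: "continuous_on UNIV (cut R)"
  unfolding cut_def by (intro continuous_on_max continuous_on_min continuous_on_const continuous_on_diff continuous_on_add continuous_on_norm continuous_on_id)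

lemma cut_range: "0 \<le> cut R x" "cut R x \<le> 1"
  unfolding cut_def by auto

lemma cut_one: "norm x \<le> R \<Longrightarrow> cut R x = 1"
  unfolding cut_def by auto

lemma cut_zero: "x \<notin> cball 0 (R+1) \<Longrightarrow> cut R x = 0"
  unfolding cut_def by auto

lemma bcont_cut_mult:
  fixes f :: "'a::euclidean_space \<Rightarrow> real"
  assumes f: "continuous_on UNIV f" shows "bcont (\<lambda>x. cut R x * f x)"
proof -
  have "compact (f ` cball 0 (R+1))"
    by (intro compact_continuous_image continuous_on_subset[OF f]) auto
  then obtain B where B: "\<And>x. x \<in> cball 0 (R+1) \<Longrightarrow> \<bar>f x\<bar> \<le> B"
    using compact_imp_bounded[of "f ` cball 0 (R+1)"] unfolding bounded_real by blast
  have "\<bar>cut R x * f x\<bar> \<le> \<bar>B\<bar>" for x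
  proof (cases "x \<in> cball 0 (R+1)")
    case True
    have "\<bar>cut R x * f x\<bar> = cut R x * \<bar>f x\<bar>" using cut_range[of R x] by (simp add: abs_mult)
    also have "\<dots> \<le> 1 * \<bar>B\<bar>" using B[OF True] cut_range[of R x]
      by (intro mult_mono) auto
    finally show ?thesis by simp
  next
    case False then show ?thesis by (simp add: cut_zero)
  qed
  then have "bounded (range (\<lambda>x. cut R x * f x))" unfolding bounded_real by blast
  moreover have "continuous_on UNIV (\<lambda>x. cut R x * f x)"
    by (intro continuous_on_mult cut_cont f)
  ultimately show ?thesis unfolding bcont_def by blast
qed

lemma arith1:
  fixes e T C tl G :: real
  assumes "0 \<le> e" "e \<le> 1" "0 \<le> T" "T \<le> C" "0 \<le> tl" "tl \<le> e" "0 \<le> G"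
  shows "e * T^2 + 2 * (2*G+e) * tl * T \<le> e * (C^2 + 2*(2*G+1)*C)"
proof -
  have "T^2 \<le> C^2" using assms by (intro power_mono) auto
  then have 1: "e * T^2 \<le> e * C^2" using assms by (intro mult_left_mono) auto
  have "(2*G+e) * tl \<le> (2*G+1) * e" using assms by (intro mult_mono) auto
  then have "(2*G+e) * tl * T \<le> (2*G+1) * e * C" using assms by (intro mult_mono) auto
  then show ?thesis using 1 by (simp add: algebra_simps)
qed



lemma prod_conv:
  fixes P M :: "nat \<Rightarrow> 'a::euclidean_space measure" and P0 M0 :: "'a measure"
  assumes fP: "\<And>N. fmeas (P N)" and fM: "\<And>N. fmeas (M N)" and P0: "fmeas P0" and M0: "fmeas M0"
    and s: "s * s = 1"
    and bnd: "\<And>N. measure (P N) UNIV + measure (M N) UNIV \<le> C"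
    and tight: "\<And>e. 0 < e \<Longrightarrow> \<exists>R. \<forall>N. measure (P N) (- cball 0 R) + measure (M N) (- cball 0 R) \<le> e"
    and conv: "\<And>f. bcont f \<Longrightarrow> (\<lambda>N. I s (P N) (M N) f) \<longlonglongrightarrow> I s P0 M0 f"
    and g: "bcont g"
  shows "(\<lambda>N. I2 s (P N) (M N) g) \<longlonglongrightarrow> I2 s P0 M0 g"
proof (rule LIMSEQ_I)
  fix r :: real assume r: "0 < r"
  obtain G where G: "\<And>z. \<bar>g z\<bar> \<le> G" using g unfolding bcont_def bounded_real by blast
  have G0: "0 \<le> G" using G[of undefined] by linarith
  define C' where "C' = max C (measure P0 UNIV + measure M0 UNIV)"
  have C'0: "0 \<le> C'" unfolding C'_def by (intro max.coboundedI2 add_nonneg_nonneg measure_nonneg)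
  define Kc where "Kc = C'^2 + 2*(2*G+1)*C'"
  have Kc0: "0 \<le> Kc" unfolding Kc_def using C'0 G0 by simp
  define e where "e = min 1 (r / (2*Kc + 2))"
  have e0: "0 < e" "e \<le> 1" unfolding e_def using r Kc0 by auto
  have er: "e * (2*Kc+1) < r"
  proof -
    have "e * (2*Kc+1) \<le> r / (2*Kc + 2) * (2*Kc+1)" unfolding e_def using Kc0
      by (intro mult_right_mono) auto
    also have "\<dots> < r / (2*Kc + 2) * (2*Kc+2)" using r Kc0 by (intro mult_strict_left_mono) auto
    also have "\<dots> = r" using Kc0 by simp
    finally show ?thesis .
  qed
  obtain R1 where R1: "\<And>N. measure (P N) (- cball 0 R1) + measure (M N) (- cball 0 R1) \<le> e"
    using tight[OF e0(1)] by blast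
  have e2: "0 < e/2" using e0 by simp
  obtain R2 where R2: "measure P0 (- cball 0 R2) < e/2" using tight_single[OF P0 e2] by blast
  obtain R3 where R3: "measure M0 (- cball 0 R3) < e/2" using tight_single[OF M0 e2] by blast
  define R where "R = max R1 (max R2 R3)"
  have sub: "- cball (0::'a) R \<subseteq> - cball 0 R'" if "R' \<le> R" for R' using that by auto
  have bc: "- cball (0::'a) R' \<in> sets borel" for R' by (intro borel_comp borel_closed closed_cball)
  have tlN: "measure (P N) (- cball 0 R) + measure (M N) (- cball 0 R) \<le> e" for N
  proof -
    have "measure (P N) (- cball 0 R) \<le> measure (P N) (- cball 0 R1)"
      by (rule fmeas_mono[OF fP sub bc]) (simp add: R_def)
    moreover have "measure (M N) (- cball 0 R) \<le> measure (M N) (- cball 0 R1)"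
      by (rule fmeas_mono[OF fM sub bc]) (simp add: R_def)
    ultimately show ?thesis using R1[of N] by linarith
  qed
  have tl0: "measure P0 (- cball 0 R) + measure M0 (- cball 0 R) \<le> e"
  proof -
    have "measure P0 (- cball 0 R) \<le> measure P0 (- cball 0 R2)"
      by (rule fmeas_mono[OF P0 sub bc]) (simp add: R_def)
    moreover have "measure M0 (- cball 0 R) \<le> measure M0 (- cball 0 R3)"
      by (rule fmeas_mono[OF M0 sub bc]) (simp add: R_def)
    ultimately show ?thesis using R2 R3 by linarith
  qed
  define K' where "K' = cball (0::'a) (R+1) \<times> cball (0::'a) (R+1)"
  have cK': "compact K'" unfolding K'_def by (intro compact_Times compact_cball)
  have gc: "continuous_on K' g" using g unfolding bcont_def by (auto intro: continuous_on_subset)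
  obtain p where p: "real_polynomial_function p" "\<And>z. z \<in> K' \<Longrightarrow> \<bar>g z - p z\<bar> < e"
    using Stone_Weierstrass_real_polynomial_function[OF cK' gc e0(1)] by blast
  obtain F and a :: "nat \<Rightarrow> 'a \<Rightarrow> real" and b :: "nat \<Rightarrow> 'a \<Rightarrow> real" where
    F: "finite F" "\<And>i. continuous_on UNIV (a i) \<and> continuous_on UNIV (b i)"
       "\<And>x y. p (x, y) = (\<Sum>i\<in>F. a i x * b i y)"
    using sepf_poly[OF p(1)] unfolding sepf_def by blast
  define a' where "a' = (\<lambda>i x. cut R x * a i x)"
  define b' where "b' = (\<lambda>i x. cut R x * b i x)"
  have a'c: "bcont (a' i)" for i unfolding a'_def using F(2)[of i] by (intro bcont_cut_mult) auto
  have b'c: "bcont (b' i)" for i unfolding b'_def using F(2)[of i] by (intro bcont_cut_mult) auto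
  define h where "h = (\<lambda>z. \<Sum>i\<in>F. a' i (fst z) * b' i (snd z))"
  have hp: "h z = cut R (fst z) * cut R (snd z) * p z" for z
  proof -
    have "p z = (\<Sum>i\<in>F. a i (fst z) * b i (snd z))" using F(3)[of "fst z" "snd z"] by simp
    then show ?thesis unfolding h_def a'_def b'_def by (simp add: sum_distrib_left mult_ac)
  qed
  have hb: "\<bar>h z\<bar> \<le> G + e" for z
  proof (cases "z \<in> K'")
    case True
    have "\<bar>p z\<bar> \<le> G + e" using p(2)[OF True] G[of z] by linarith
    moreover have "\<bar>h z\<bar> = cut R (fst z) * cut R (snd z) * \<bar>p z\<bar>"
      unfolding hp using cut_range[of R "fst z"] cut_range[of R "snd z"] by (simp add: abs_mult)
    moreover have "cut R (fst z) * cut R (snd z) \<le> 1"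
      using cut_range[of R "fst z"] cut_range[of R "snd z"] by (simp add: mult_le_one)
    moreover have "0 \<le> cut R (fst z) * cut R (snd z)"
      using cut_range[of R "fst z"] cut_range[of R "snd z"] by simp
    ultimately show ?thesis using mult_left_le_one_le[of "\<bar>p z\<bar>" "cut R (fst z) * cut R (snd z)"]
      by (simp add: mult_ac)
  next
    case False
    then have "cut R (fst z) = 0 \<or> cut R (snd z) = 0" unfolding K'_def
      by (metis cut_zero mem_Times_iff)
    then have "h z = 0" unfolding hp by auto
    then show ?thesis using G0 e0 by simp
  qed
  have hc: "continuous_on UNIV h"
  proof -
    have "continuous_on UNIV (\<lambda>z::'a\<times>'a. a' i (fst z) * b' i (snd z))" for i
    proof -
      have "continuous_on UNIV (\<lambda>z::'a\<times>'a. a' i (fst z))"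
        using a'c[of i] unfolding bcont_def
        by (intro continuous_on_compose2[of UNIV "a' i" UNIV fst]) (auto intro: continuous_on_fst continuous_on_id)
      moreover have "continuous_on UNIV (\<lambda>z::'a\<times>'a. b' i (snd z))"
        using b'c[of i] unfolding bcont_def
        by (intro continuous_on_compose2[of UNIV "b' i" UNIV snd]) (auto intro: continuous_on_snd continuous_on_id)
      ultimately show ?thesis by (rule continuous_on_mult)
    qed
    then show ?thesis unfolding h_def by (intro continuous_on_sum) auto
  qed
  have hbm: "bmeas h" by (rule bmeasI[OF borel_measurable_continuous_onI[OF hc] hb])
  have gbm: "bmeas g" by (rule bcont_bmeas[OF g])
  have bd: "\<bar>g z - h z\<bar> \<le> e + (2*G+e) * (indicator (- cball 0 R) (fst z) + indicator (- cball 0 R) (snd z))" for z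
  proof (cases "fst z \<in> cball 0 R \<and> snd z \<in> cball 0 R")
    case True
    then have "z \<in> K'" unfolding K'_def by (cases z) auto
    moreover have "h z = p z" unfolding hp using True by (simp add: cut_one)
    ultimately have "\<bar>g z - h z\<bar> < e" using p(2) by simp
    moreover have "0 \<le> (2*G+e) * (indicator (- cball 0 R) (fst z) + indicator (- cball 0 R) (snd z))"
      using G0 e0 by (intro mult_nonneg_nonneg add_nonneg_nonneg) auto
    ultimately show ?thesis by linarith
  next
    case False
    then have "1 \<le> indicator (- cball 0 R) (fst z) + (indicator (- cball 0 R) (snd z) :: real)"
      by (auto simp: indicator_def)
    then have "(2*G+e) * 1 \<le> (2*G+e) * (indicator (- cball 0 R) (fst z) + indicator (- cball 0 R) (snd z))"
      using G0 e0 by (intro mult_left_mono) auto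
    then have "(2*G+e) \<le> (2*G+e) * (indicator (- cball 0 R) (fst z) + indicator (- cball 0 R) (snd z))"
      by simp
    moreover have "\<bar>g z - h z\<bar> \<le> G + (G + e)" using G[of z] hb[of z] by linarith
    ultimately show ?thesis using e0 by linarith
  qed
  have I2h: "I2 s X Y h = (\<Sum>i\<in>F. I s X Y (a' i) * I s X Y (b' i))" if "fmeas X" "fmeas Y" for X Y
    unfolding h_def by (rule I2_sepsum[OF that s]) (simp add: bcont_bmeas[OF a'c] bcont_bmeas[OF b'c])
  have lim_h: "(\<lambda>N. I2 s (P N) (M N) h) \<longlonglongrightarrow> I2 s P0 M0 h"
    unfolding I2h[OF fP fM] I2h[OF P0 M0]
    by (intro tendsto_sum tendsto_mult conv a'c b'c)
  obtain N0 where N0: "\<And>N. N \<ge> N0 \<Longrightarrow> norm (I2 s (P N) (M N) h - I2 s P0 M0 h) < e"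
    using LIMSEQ_D[OF lim_h e0(1)] by blast
  have bc0: "cball (0::'a) R \<in> sets borel" by (intro borel_closed closed_cball)
  have approx: "\<bar>I2 s X Y g - I2 s X Y h\<bar> \<le> e * Kc"
    if X: "fmeas X" and Y: "fmeas Y" and T: "measure X UNIV + measure Y UNIV \<le> C'"
      and tl: "measure X (- cball 0 R) + measure Y (- cball 0 R) \<le> e" for X Y
  proof -
    have "\<bar>I2 s X Y g - I2 s X Y h\<bar> \<le> e * (measure X UNIV + measure Y UNIV)^2 +
      2 * (2*G+e) * (measure X (- cball 0 R) + measure Y (- cball 0 R)) * (measure X UNIV + measure Y UNIV)"
      by (rule I2_approx[OF X Y s gbm hbm bc0]) (use e0 G0 bd in auto)
    also have "\<dots> \<le> e * (C'^2 + 2*(2*G+1)*C')"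
      by (rule arith1) (use e0 T tl G0 in \<open>auto intro: add_nonneg_nonneg measure_nonneg\<close>)
    finally show ?thesis unfolding Kc_def .
  qed
  show "\<exists>no. \<forall>n\<ge>no. norm (I2 s (P n) (M n) g - I2 s P0 M0 g) < r"
  proof (intro exI allI impI)
    fix N assume N: "N0 \<le> N"
    have TN: "measure (P N) UNIV + measure (M N) UNIV \<le> C'" using bnd[of N] unfolding C'_def by linarith
    have T0: "measure P0 UNIV + measure M0 UNIV \<le> C'" unfolding C'_def by linarith
    have A1: "\<bar>I2 s (P N) (M N) g - I2 s (P N) (M N) h\<bar> \<le> e * Kc" by (rule approx[OF fP fM TN tlN])
    have A2: "\<bar>I2 s P0 M0 g - I2 s P0 M0 h\<bar> \<le> e * Kc" by (rule approx[OF P0 M0 T0 tl0])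
    have A3: "\<bar>I2 s (P N) (M N) h - I2 s P0 M0 h\<bar> < e" using N0[OF N] by simp
    have "norm (I2 s (P N) (M N) g - I2 s P0 M0 g) < e * Kc + e + e * Kc"
      using A1 A2 A3 unfolding real_norm_def by linarith
    also have "\<dots> = e * (2*Kc+1)" by (simp add: algebra_simps)
    finally show "norm (I2 s (P N) (M N) g - I2 s P0 M0 g) < r" using er by linarith
  qed
qed



lemma dconv:
  assumes A: "fmeas A" and m: "\<And>n. F n \<in> borel_measurable borel" "F0 \<in> borel_measurable borel"
    and b: "\<And>n x. \<bar>F n x\<bar> \<le> B" and lim: "\<And>x. (\<lambda>n. F n x) \<longlonglongrightarrow> F0 x"
  shows "(\<lambda>n. integral\<^sup>L A (F n)) \<longlonglongrightarrow> integral\<^sup>L A (F0 :: _ \<Rightarrow> real)"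
proof (rule integral_dominated_convergence[where w="\<lambda>x. B"])
  show "F0 \<in> borel_measurable A" by (rule fmeas_meas[OF A m(2)])
  show "F n \<in> borel_measurable A" for n by (rule fmeas_meas[OF A m(1)])
  show "integrable A (\<lambda>x. B)" by (rule bmeas_integrable[OF A bmeas_const])
  show "AE x in A. (\<lambda>n. F n x) \<longlonglongrightarrow> F0 x" using lim by simp
  show "AE x in A. norm (F n x) \<le> B" for n using b by simp
qed

lemma dconv_I:
  assumes P: "fmeas P" and M: "fmeas M" and m: "\<And>n. F n \<in> borel_measurable borel" "F0 \<in> borel_measurable borel"
    and b: "\<And>n x. \<bar>F n x\<bar> \<le> B" and lim: "\<And>x. (\<lambda>n. F n x) \<longlonglongrightarrow> F0 x"
  shows "(\<lambda>n. I s P M (F n)) \<longlonglongrightarrow> I s P M F0"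
  unfolding I_def
  by (intro tendsto_add tendsto_mult tendsto_const dconv[OF P m b lim] dconv[OF M m b lim])

lemma dconv_I2:
  fixes P M :: "'a::second_countable_topology measure"
  assumes P: "fmeas P" and M: "fmeas M" and m: "\<And>n. F n \<in> borel_measurable borel" "F0 \<in> borel_measurable borel"
    and b: "\<And>n x. \<bar>F n x\<bar> \<le> B" and lim: "\<And>x. (\<lambda>n. F n x) \<longlonglongrightarrow> F0 x"
  shows "(\<lambda>n. I2 s P M (F n)) \<longlonglongrightarrow> I2 s P M F0"
  unfolding I2_def
  by (intro tendsto_add tendsto_mult tendsto_const dconv[OF fmeas_pair[OF P P] m b lim]
      dconv[OF fmeas_pair[OF P M] m b lim] dconv[OF fmeas_pair[OF M P] m b lim] dconv[OF fmeas_pair[OF M M] m b lim])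

definition appr :: "'a::metric_space set \<Rightarrow> nat \<Rightarrow> 'a \<Rightarrow> real" where
  "appr S n p = (if S = {} then 0 else max 0 (1 - real (Suc n) * infdist p S))"

lemma appr_range: "0 \<le> appr S n p" "appr S n p \<le> 1"
  unfolding appr_def using infdist_nonneg[of p S] by auto

lemma appr_bcont: "bcont (appr S n)"
proof -
  have "continuous_on UNIV (appr S n)"
  proof (cases "S = {}")
    case True then show ?thesis unfolding appr_def by simp
  next
    case False
    have "continuous_on UNIV (\<lambda>p. max 0 (1 - real (Suc n) * infdist p S))"
      by (intro continuous_on_max continuous_on_const continuous_on_diff continuous_on_mult
          continuous_on_infdist continuous_on_id)
    then show ?thesis unfolding appr_def using False by simp
  qed
  moreover have "bounded (range (appr S n))"
    unfolding bounded_real using appr_range[of S n] by (intro exI[of _ 1]) auto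
  ultimately show ?thesis unfolding bcont_def by blast
qed

lemma appr_lim:
  assumes S: "closed S" shows "(\<lambda>n. appr S n p) \<longlonglongrightarrow> indicator S p"
proof (cases "S = {}")
  case True then show ?thesis unfolding appr_def by simp
next
  case ne: False
  show ?thesis
  proof (cases "p \<in> S")
    case True
    then have "infdist p S = 0" by simp
    then have "appr S n p = 1" for n unfolding appr_def using ne by simp
    then show ?thesis using True by simp
  next
    case False
    have d: "0 < infdist p S" using infdist_pos_not_in_closed[OF S ne False] .
    obtain N :: nat where N: "1 / infdist p S < real N" using reals_Archimedean2 by blast
    have "appr S n p = 0" if "N \<le> n" for n
    proof -
      have "1 / infdist p S < real (Suc n)" using N that by linarith
      then have "1 < real (Suc n) * infdist p S" using d by (simp add: field_simps)
      then show ?thesis unfolding appr_def using ne by simp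
    qed
    then have "eventually (\<lambda>n. appr S n p = 0) sequentially" unfolding eventually_sequentially by blast
    then have "(\<lambda>n. appr S n p) \<longlonglongrightarrow> 0" by (rule tendsto_eventually)
    then show ?thesis using False by simp
  qed
qed

definition diag :: "('a \<times> 'a) set" where "diag = {p. fst p = snd p}"

lemma diag_borel: "(diag :: ('a::{second_countable_topology, t2_space} \<times> 'a) set) \<in> sets borel"
proof -
  have "closed (diag :: ('a \<times> 'a) set)" unfolding diag_def
    by (intro closed_Collect_eq continuous_on_fst continuous_on_snd continuous_on_id)
  then show ?thesis by (rule borel_closed)
qed

lemma diag_null1:
  fixes A B :: "'a::{second_countable_topology, t2_space} measure"
  assumes A: "fmeas A" and B: "fmeas B" and na: "\<And>x. emeasure B {x} = 0"
  shows "emeasure (A \<Otimes>\<^sub>M B) diag = 0"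
proof -
  interpret B: finite_measure B using B by (simp add: fmeas_def)
  have d: "diag \<in> sets (A \<Otimes>\<^sub>M B)" using fmeas_pair[OF A B] diag_borel by (simp add: fmeas_def)
  have "emeasure (A \<Otimes>\<^sub>M B) diag = (\<integral>\<^sup>+x. emeasure B (Pair x -` diag) \<partial>A)"
    by (rule B.emeasure_pair_measure_alt[OF d])
  also have "\<dots> = (\<integral>\<^sup>+x. 0 \<partial>A)"
  proof (rule nn_integral_cong)
    fix x :: 'a have "Pair x -` diag = {x}" unfolding diag_def by auto
    then show "emeasure B (Pair x -` diag) = 0" using na by simp
  qed
  finally show ?thesis by simp
qed

lemma diag_null2:
  fixes A B :: "'a::{second_countable_topology, t2_space} measure"
  assumes A: "fmeas A" and B: "fmeas B" and na: "\<And>x. emeasure A {x} = 0"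
  shows "emeasure (A \<Otimes>\<^sub>M B) diag = 0"
proof -
  interpret A: finite_measure A using A by (simp add: fmeas_def)
  interpret B: finite_measure B using B by (simp add: fmeas_def)
  interpret pair_sigma_finite A B ..
  have d: "diag \<in> sets (A \<Otimes>\<^sub>M B)" using fmeas_pair[OF A B] diag_borel by (simp add: fmeas_def)
  have "emeasure (A \<Otimes>\<^sub>M B) diag = (\<integral>\<^sup>+y. emeasure A ((\<lambda>x. (x, y)) -` diag) \<partial>B)"
    by (rule emeasure_pair_measure_alt2[OF d])
  also have "\<dots> = (\<integral>\<^sup>+x. 0 \<partial>B)"
  proof (rule nn_integral_cong)
    fix y :: 'a have "(\<lambda>x. (x, y)) -` diag = {y}" unfolding diag_def by auto
    then show "emeasure A ((\<lambda>x. (x, y)) -` diag) = 0" using na by simp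
  qed
  finally show ?thesis by simp
qed



locale setting =
  fixes \<mu>s :: "nat \<Rightarrow> (real^2) measure \<times> (real^2) measure"
    and \<mu> :: "(real^2) measure \<times> (real^2) measure"
    and \<nu>d :: "(real^2) measure"
    and \<gamma> :: "nat \<Rightarrow> real" and z :: "nat \<Rightarrow> real^2"
    and Q :: "real^2 \<Rightarrow> real"
    and m :: "((real^2) \<times> (real^2)) measure \<times> ((real^2) \<times> (real^2)) measure"
  assumes mus: "\<And>N. signed_meas (\<mu>s N)"
    and mu: "signed_meas \<mu>" and mu_na: "s_nonatomic \<mu>"
    and conv: "\<And>f. bcont f \<Longrightarrow> (\<lambda>N. sint (\<mu>s N) f) \<longlonglongrightarrow> sint \<mu> f"
    and nud: "finite_measure \<nu>d" "sets \<nu>d = sets borel" "\<And>x. emeasure \<nu>d {x} = 0"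
    and gamma: "\<And>j. \<gamma> j \<ge> 0" "summable \<gamma>" and z_inj: "inj z"
    and vconv: "\<And>f. bcont f \<Longrightarrow>
        (\<lambda>N. var_int (\<mu>s N) f) \<longlonglongrightarrow> (\<integral>x. f x \<partial>\<nu>d) + (\<Sum>j. \<gamma> j * f (z j))"
    and Qcont: "continuous_on (-{0}) Q" and Qbdd: "bounded (Q ` (-{0}))"
    and Q0: "\<bar>Q 0\<bar> \<le> Qnorm Q"
    and m: "signed_meas m"
    and mconv: "\<And>f. bcont f \<Longrightarrow>
        (\<lambda>N. sint2 (\<mu>s N) (\<lambda>(x, y). Q (x - y) * f (x, y))) \<longlonglongrightarrow> sint m f"
begin

definition "\<nu>a = distr (density (count_space UNIV) (\<lambda>j. ennreal (\<gamma> j))) borel z"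
abbreviation "Qb \<equiv> Qnorm Q"

lemma signed_fmeas:
  assumes "signed_meas (\<rho> :: ('a::topological_space) measure \<times> 'a measure)"
  shows "fmeas (fst \<rho>)" "fmeas (snd \<rho>)"
  using assms unfolding signed_meas_def fmeas_def by auto

lemma fPN: "fmeas (fst (\<mu>s N))" using signed_fmeas(1)[OF mus] .
lemma fMN: "fmeas (snd (\<mu>s N))" using signed_fmeas(2)[OF mus] .
lemma fP: "fmeas (fst \<mu>)" using signed_fmeas(1)[OF mu] .
lemma fM: "fmeas (snd \<mu>)" using signed_fmeas(2)[OF mu] .
lemma fPm: "fmeas (fst m)" using signed_fmeas(1)[OF m] .
lemma fMm: "fmeas (snd m)" using signed_fmeas(2)[OF m] .
lemma fnud: "fmeas \<nu>d" using nud unfolding fmeas_def by auto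

lemma z_meas: "z \<in> measurable (density (count_space UNIV) (\<lambda>j. ennreal (\<gamma> j))) borel"
  using measurable_cong_sets[of "density (count_space UNIV) (\<lambda>j. ennreal (\<gamma> j))" "count_space UNIV" borel borel]
  by simp

lemma emeasure_dens_sing: "emeasure (density (count_space UNIV) (\<lambda>j. ennreal (\<gamma> j))) {j} = ennreal (\<gamma> j)"
  by (subst emeasure_density) auto

lemma fnua: "fmeas \<nu>a"
proof -
  have s: "sets \<nu>a = sets borel" unfolding \<nu>a_def by simp
  have "emeasure \<nu>a (space \<nu>a) = emeasure (density (count_space UNIV) (\<lambda>j. ennreal (\<gamma> j))) UNIV"
    unfolding \<nu>a_def by (subst emeasure_distr[OF z_meas]) auto
  also have "\<dots> = (\<integral>\<^sup>+j. ennreal (\<gamma> j) \<partial>count_space UNIV)"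
    by (subst emeasure_density) auto
  also have "\<dots> = (\<Sum>j. ennreal (\<gamma> j))" by (rule nn_integral_count_space_nat)
  also have "\<dots> = ennreal (suminf \<gamma>)" using gamma by (intro suminf_ennreal2) auto
  finally have "emeasure \<nu>a (space \<nu>a) \<noteq> \<infinity>" by simp
  then have "finite_measure \<nu>a" by (rule finite_measureI)
  then show ?thesis using s unfolding fmeas_def by simp
qed

lemma nua_atom: "emeasure \<nu>a {z j} = ennreal (\<gamma> j)"
proof -
  have "z -` {z j} = {j}" using z_inj by (auto simp: inj_def)
  then show ?thesis unfolding \<nu>a_def
    by (subst emeasure_distr[OF z_meas]) (auto simp: emeasure_dens_sing)
qed

lemma nua_atom': "measure \<nu>a {z j} = \<gamma> j"
  using nua_atom gamma(1)[of j] by (simp add: measure_def)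

lemma rz_borel: "range z \<in> sets borel"
  by (rule sets.countable) auto

lemma nua_null: "emeasure \<nu>a (- range z) = 0"
proof -
  have "z -` (- range z) = {}" by auto
  moreover have "- range z \<in> sets borel" using rz_borel by auto
  ultimately show ?thesis unfolding \<nu>a_def
    by (subst emeasure_distr[OF z_meas]) auto
qed

lemma int_nua:
  assumes f: "bmeas f"
  shows "integral\<^sup>L \<nu>a f = (\<Sum>j. \<gamma> j * f (z j))" and "summable (\<lambda>j. \<gamma> j * f (z j))"
proof -
  obtain B where B: "\<And>x. \<bar>f x\<bar> \<le> B" using f unfolding bmeas_def by blast
  have fm: "f \<in> borel_measurable borel" using f unfolding bmeas_def by blast
  have sn: "summable (\<lambda>j. norm (\<gamma> j * f (z j)))"
  proof (rule summable_comparison_test[where g="\<lambda>j. \<gamma> j * B"])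
    show "\<exists>N. \<forall>n\<ge>N. norm (norm (\<gamma> n * f (z n))) \<le> \<gamma> n * B"
      using gamma(1) B by (auto simp: abs_mult intro!: mult_left_mono)
    show "summable (\<lambda>j. \<gamma> j * B)" using gamma(2) by (rule summable_mult2)
  qed
  then show "summable (\<lambda>j. \<gamma> j * f (z j))" by (rule summable_norm_cancel)
  have "integral\<^sup>L \<nu>a f = integral\<^sup>L (density (count_space UNIV) (\<lambda>j. ennreal (\<gamma> j))) (\<lambda>j. f (z j))"
    unfolding \<nu>a_def by (rule integral_distr[OF z_meas fm])
  also have "\<dots> = integral\<^sup>L (count_space UNIV) (\<lambda>j. \<gamma> j *\<^sub>R f (z j))"
    by (rule integral_density) (use gamma(1) in auto)
  also have "\<dots> = (\<Sum>j. \<gamma> j * f (z j))"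
    by (subst integral_count_space_nat) (use sn in \<open>auto simp: integrable_count_space_nat_iff\<close>)
  finally show "integral\<^sup>L \<nu>a f = (\<Sum>j. \<gamma> j * f (z j))" .
qed

lemma vconv': "bcont f \<Longrightarrow> (\<lambda>N. I 1 (fst (\<mu>s N)) (snd (\<mu>s N)) f) \<longlonglongrightarrow> I 1 \<nu>d \<nu>a f"
  using vconv[of f] int_nua(1)[OF bcont_bmeas, of f] unfolding var_int_I I_def by simp

lemma conv': "bcont f \<Longrightarrow> (\<lambda>N. I (-1) (fst (\<mu>s N)) (snd (\<mu>s N)) f) \<longlonglongrightarrow> I (-1) (fst \<mu>) (snd \<mu>) f"
  using conv[of f] unfolding sint_I by simp

lemma Qb_bound: "\<bar>Q v\<bar> \<le> Qb"
proof (cases "v = 0")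
  case True then show ?thesis using Q0 by simp
next
  case False
  obtain B where "\<And>x. x \<in> Q ` (-{0}) \<Longrightarrow> \<bar>x\<bar> \<le> B" using Qbdd unfolding bounded_real by blast
  then have "bdd_above ((\<lambda>x. \<bar>Q x\<bar>) ` (-{0}))" by (auto intro!: bdd_aboveI[of _ B])
  then show ?thesis unfolding Qnorm_def using False by (intro cSUP_upper) auto
qed

lemma Qb_nonneg: "0 \<le> Qb" using Qb_bound[of 0] by linarith

lemma Q_meas: "Q \<in> borel_measurable borel"
proof -
  have "(\<lambda>x. if x \<in> -{0} then Q x else Q 0) \<in> borel_measurable borel"
    by (rule borel_measurable_continuous_on_if) (auto intro: Qcont)
  moreover have "(\<lambda>x. if x \<in> -{0} then Q x else Q 0) = Q" by auto
  ultimately show ?thesis by simp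
qed

end



lemma tight_fin:
  fixes \<phi> :: "nat \<Rightarrow> real \<Rightarrow> real" and K :: nat
  assumes mono: "\<And>N R R'. R \<le> R' \<Longrightarrow> \<phi> N R' \<le> \<phi> N R" and ex: "\<And>N. \<exists>R. \<phi> N R \<le> (e::real)"
  shows "\<exists>R::real. \<forall>N<K. \<phi> N R \<le> e"
proof (induction K)
  case 0 then show ?case by simp
next
  case (Suc K)
  then obtain R where R: "\<forall>N<K. \<phi> N R \<le> e" by blast
  obtain R' where R': "\<phi> K R' \<le> e" using ex by blast
  have "\<forall>N<Suc K. \<phi> N (max R R') \<le> e"
  proof (intro allI impI)
    fix N assume "N < Suc K"
    then consider "N < K" | "N = K" by linarith
    then show "\<phi> N (max R R') \<le> e"
    proof cases
      case 1 then show ?thesis using R mono[of R "max R R'" N] by fastforce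
    next
      case 2 then show ?thesis using R' mono[of R' "max R R'" N] by fastforce
    qed
  qed
  then show ?case by blast
qed

lemma bcont_const: "bcont (\<lambda>x. c)"
  unfolding bcont_def by auto

context setting begin

lemma bnd: "\<exists>C. \<forall>N. measure (fst (\<mu>s N)) UNIV + measure (snd (\<mu>s N)) UNIV \<le> C"
proof -
  have "(\<lambda>N. I 1 (fst (\<mu>s N)) (snd (\<mu>s N)) (\<lambda>x. 1)) \<longlonglongrightarrow> I 1 \<nu>d \<nu>a (\<lambda>x. 1)"
    by (rule vconv'[OF bcont_const])
  then have "Bseq (\<lambda>N. I 1 (fst (\<mu>s N)) (snd (\<mu>s N)) (\<lambda>x. 1))"
    by (intro convergent_imp_Bseq convergentI)
  then obtain K where K0: "\<forall>N. norm (I 1 (fst (\<mu>s N)) (snd (\<mu>s N)) (\<lambda>x. 1)) \<le> K"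
    by (rule BseqE) blast
  then have K: "norm (I 1 (fst (\<mu>s N)) (snd (\<mu>s N)) (\<lambda>x. 1)) \<le> K" for N by blast
  have "measure (fst (\<mu>s N)) UNIV + measure (snd (\<mu>s N)) UNIV \<le> K" for N
    using K[of N] unfolding I_def by (simp add: fmeas_space[OF fPN] fmeas_space[OF fMN])
  then show ?thesis by blast
qed

lemma tight:
  assumes e: "0 < e"
  shows "\<exists>R. \<forall>N. measure (fst (\<mu>s N)) (- cball 0 R) + measure (snd (\<mu>s N)) (- cball 0 R) \<le> e"
proof -
  have bc: "- cball (0::real^2) R' \<in> sets borel" for R' by (intro borel_comp borel_closed closed_cball)
  have sub: "- cball (0::real^2) R \<subseteq> - cball 0 R'" if "R' \<le> R" for R R' using that by auto
  have e4: "0 < e/4" using e by simp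
  obtain R2 where R2: "measure \<nu>d (- cball 0 R2) < e/4" using tight_single[OF fnud e4] by blast
  obtain R3 where R3: "measure \<nu>a (- cball 0 R3) < e/4" using tight_single[OF fnua e4] by blast
  define R0 where "R0 = max R2 R3"
  have tl: "measure \<nu>d (- cball 0 R0) + measure \<nu>a (- cball 0 R0) < e/2"
  proof -
    have "measure \<nu>d (- cball 0 R0) \<le> measure \<nu>d (- cball 0 R2)"
      by (rule fmeas_mono[OF fnud sub bc]) (simp add: R0_def)
    moreover have "measure \<nu>a (- cball 0 R0) \<le> measure \<nu>a (- cball 0 R3)"
      by (rule fmeas_mono[OF fnua sub bc]) (simp add: R0_def)
    ultimately show ?thesis using R2 R3 by linarith
  qed
  define f where "f = (\<lambda>x::real^2. 1 - cut R0 x)"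
  have fc: "bcont f"
  proof -
    have "continuous_on UNIV f" unfolding f_def by (intro continuous_on_diff continuous_on_const cut_cont)
    moreover have "\<bar>f x\<bar> \<le> 1" for x unfolding f_def using cut_range[of R0 x] by (auto simp: abs_if)
    then have "bounded (range f)" unfolding bounded_real by blast
    ultimately show ?thesis unfolding bcont_def by blast
  qed
  have fb: "bmeas f" by (rule bcont_bmeas[OF fc])
  have f_up: "f x \<le> indicator (- cball 0 R0) x" for x
    unfolding f_def using cut_one[of x R0] cut_range[of R0 x] by (auto simp: indicator_def)
  have f_low: "indicator (- cball 0 (R0+1)) x \<le> f x" for x
    unfolding f_def using cut_zero[of x R0] cut_range[of R0 x] by (auto simp: indicator_def)
  have bi: "bmeas (indicator (- cball (0::real^2) r) :: real^2 \<Rightarrow> real)" for r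
    by (rule bmeas_indicator[OF bc])
  have intle: "integral\<^sup>L X f \<le> measure X (- cball 0 R0)" if X: "fmeas X" for X
  proof -
    have "integral\<^sup>L X f \<le> integral\<^sup>L X (indicator (- cball 0 R0))"
      by (rule integral_mono[OF bmeas_integrable[OF X fb] bmeas_integrable[OF X bi]]) (rule f_up)
    then show ?thesis by (simp add: fmeas_space[OF X])
  qed
  have intge: "measure X (- cball 0 (R0+1)) \<le> integral\<^sup>L X f" if X: "fmeas X" for X
  proof -
    have "integral\<^sup>L X (indicator (- cball 0 (R0+1))) \<le> integral\<^sup>L X f"
      by (rule integral_mono[OF bmeas_integrable[OF X bi] bmeas_integrable[OF X fb]]) (rule f_low)
    then show ?thesis by (simp add: fmeas_space[OF X])
  qed
  have "I 1 \<nu>d \<nu>a f = integral\<^sup>L \<nu>d f + integral\<^sup>L \<nu>a f" by (simp add: I_def)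
  then have "I 1 \<nu>d \<nu>a f < e" using intle[OF fnud] intle[OF fnua] tl
    measure_nonneg[of \<nu>d "- cball 0 R0"] measure_nonneg[of \<nu>a "- cball 0 R0"] by linarith
  from order_tendstoD(2)[OF vconv'[OF fc] this]
  obtain N1 where N1: "\<And>N. N1 \<le> N \<Longrightarrow> I 1 (fst (\<mu>s N)) (snd (\<mu>s N)) f < e"
    unfolding eventually_sequentially by blast
  have large: "measure (fst (\<mu>s N)) (- cball 0 (R0+1)) + measure (snd (\<mu>s N)) (- cball 0 (R0+1)) \<le> e"
    if "N1 \<le> N" for N
    using N1[OF that] intge[OF fPN, of N] intge[OF fMN, of N] unfolding I_def by simp
  define \<phi> where "\<phi> = (\<lambda>N R. measure (fst (\<mu>s N)) (- cball 0 R) + measure (snd (\<mu>s N)) (- cball 0 R))"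
  have mono: "\<phi> N R' \<le> \<phi> N R" if "R \<le> R'" for N R R'
    unfolding \<phi>_def using fmeas_mono[OF fPN[of N] sub[OF that] bc] fmeas_mono[OF fMN[of N] sub[OF that] bc] by simp
  have ex: "\<exists>R. \<phi> N R \<le> e" for N
  proof -
    have e2: "0 < e/2" using e by simp
    obtain Ra where Ra: "measure (fst (\<mu>s N)) (- cball 0 Ra) < e/2" using tight_single[OF fPN e2] by blast
    obtain Rb where Rb: "measure (snd (\<mu>s N)) (- cball 0 Rb) < e/2" using tight_single[OF fMN e2] by blast
    have "measure (fst (\<mu>s N)) (- cball 0 (max Ra Rb)) \<le> measure (fst (\<mu>s N)) (- cball 0 Ra)"
      by (rule fmeas_mono[OF fPN sub bc]) simp
    moreover have "measure (snd (\<mu>s N)) (- cball 0 (max Ra Rb)) \<le> measure (snd (\<mu>s N)) (- cball 0 Rb)"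
      by (rule fmeas_mono[OF fMN sub bc]) simp
    ultimately have "\<phi> N (max Ra Rb) \<le> e" unfolding \<phi>_def using Ra Rb by linarith
    then show ?thesis by blast
  qed
  obtain Rf where Rf: "\<forall>N<N1. \<phi> N Rf \<le> e" using tight_fin[of \<phi> e N1, OF mono ex] by blast
  have "\<phi> N (max (R0+1) Rf) \<le> e" for N
  proof (cases "N < N1")
    case True then show ?thesis using Rf mono[of Rf "max (R0+1) Rf" N] by fastforce
  next
    case False then show ?thesis using large[of N] mono[of "R0+1" "max (R0+1) Rf" N] unfolding \<phi>_def by fastforce
  qed
  then show ?thesis unfolding \<phi>_def by blast
qed

lemma PC1: "bcont g \<Longrightarrow> (\<lambda>N. I2 (-1) (fst (\<mu>s N)) (snd (\<mu>s N)) g) \<longlonglongrightarrow> I2 (-1) (fst \<mu>) (snd \<mu>) g"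
proof -
  assume g: "bcont g"
  obtain C where C: "\<forall>N. measure (fst (\<mu>s N)) UNIV + measure (snd (\<mu>s N)) UNIV \<le> C" using bnd by blast
  show ?thesis
    by (rule prod_conv[OF fPN fMN fP fM _ _ tight conv' g]) (use C in auto)
qed

lemma PC2: "bcont g \<Longrightarrow> (\<lambda>N. I2 1 (fst (\<mu>s N)) (snd (\<mu>s N)) g) \<longlonglongrightarrow> I2 1 \<nu>d \<nu>a g"
proof -
  assume g: "bcont g"
  obtain C where C: "\<forall>N. measure (fst (\<mu>s N)) UNIV + measure (snd (\<mu>s N)) UNIV \<le> C" using bnd by blast
  show ?thesis
    by (rule prod_conv[OF fPN fMN fnud fnua _ _ tight vconv' g]) (use C in auto)
qed

end



context setting begin

definition "Qf f = (\<lambda>p::(real^2)\<times>(real^2). Q (fst p - snd p) * f p)"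
definition "Wd d v = Q v * min 1 (norm (v::real^2) / d)"
definition "psi d p = min 1 (norm (fst p - snd p :: real^2) / d)"

lemma psi_range: "0 < d \<Longrightarrow> 0 \<le> psi d p" "psi d p \<le> 1"
  unfolding psi_def by auto

lemma psi_cont: "0 < d \<Longrightarrow> continuous_on UNIV (psi d)"
  unfolding psi_def
  by (intro continuous_on_min continuous_on_const continuous_on_divide continuous_on_norm
      continuous_on_diff continuous_on_fst continuous_on_snd continuous_on_id) auto

lemma W_cont:
  assumes d: "0 < d" shows "continuous_on UNIV (Wd d)"
proof -
  have "isCont (Wd d) v" for v
  proof (cases "v = 0")
    case False
    have o: "open (-{0::real^2})" by auto
    have "isCont Q v" using continuous_on_eq_continuous_at[OF o] Qcont False by blast
    moreover have "isCont (\<lambda>v::real^2. min 1 (norm v / d)) v"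
      by (intro continuous_min continuous_const continuous_divide continuous_norm continuous_ident) (use d in auto)
    ultimately show ?thesis unfolding Wd_def by (intro continuous_mult)
  next
    case True
    have "(Wd d \<longlongrightarrow> 0) (at v)"
    proof (rule Lim_null_comparison)
      show "\<forall>\<^sub>F x in at v. norm (Wd d x) \<le> Qb * (norm x / d)"
      proof (rule always_eventually, rule allI)
        fix x :: "real^2"
        have "norm (Wd d x) = \<bar>Q x\<bar> * min 1 (norm x / d)" unfolding Wd_def using d by (simp add: abs_mult)
        also have "\<dots> \<le> Qb * (norm x / d)" using d Qb_bound[of x] by (intro mult_mono) auto
        finally show "norm (Wd d x) \<le> Qb * (norm x / d)" .
      qed
      have "((\<lambda>x::real^2. Qb * (norm x / d)) \<longlongrightarrow> Qb * (norm v / d)) (at v)"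
        using d by (auto intro!: tendsto_intros)
      then show "((\<lambda>x::real^2. Qb * (norm x / d)) \<longlongrightarrow> 0) (at v)" using True by simp
    qed
    moreover have "Wd d v = 0" using True unfolding Wd_def by simp
    ultimately show ?thesis unfolding isCont_def by simp
  qed
  then show ?thesis by (simp add: continuous_on_eq_continuous_at)
qed

lemma dc: "continuous_on UNIV (\<lambda>p::(real^2)\<times>(real^2). fst p - snd p)"
  by (intro continuous_on_diff continuous_on_fst continuous_on_snd continuous_on_id)

lemma G_bcont:
  assumes f: "bcont f" and d: "0 < d"
  shows "bcont (\<lambda>p. Wd d (fst p - snd p) * f p)"
proof -
  obtain B where B: "\<And>p. \<bar>f p\<bar> \<le> B" using f unfolding bcont_def bounded_real by blast
  have "continuous_on UNIV (\<lambda>p::(real^2)\<times>(real^2). Wd d (fst p - snd p))"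
    by (rule continuous_on_compose2[OF W_cont[OF d] dc]) auto
  then have c: "continuous_on UNIV (\<lambda>p. Wd d (fst p - snd p) * f p)"
    using f unfolding bcont_def by (intro continuous_on_mult) auto
  have "\<bar>Wd d (fst p - snd p) * f p\<bar> \<le> Qb * B" for p
  proof -
    have m0: "0 \<le> min 1 (norm (fst p - snd p) / d)" "min 1 (norm (fst p - snd p) / d) \<le> 1" using d by auto
    have "\<bar>Wd d (fst p - snd p)\<bar> = \<bar>Q (fst p - snd p)\<bar> * min 1 (norm (fst p - snd p) / d)"
      unfolding Wd_def using m0 by (simp add: abs_mult)
    also have "\<dots> \<le> Qb * 1" using m0 Qb_bound[of "fst p - snd p"] by (intro mult_mono) auto
    finally have "\<bar>Wd d (fst p - snd p)\<bar> \<le> Qb" by simp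
    then show ?thesis using B[of p] by (simp add: abs_mult mult_mono Qb_nonneg)
  qed
  then have "bounded (range (\<lambda>p. Wd d (fst p - snd p) * f p))" unfolding bounded_real by blast
  then show ?thesis using c unfolding bcont_def by blast
qed

lemma h_bcont:
  assumes f: "bcont f" and d: "0 < d"
  shows "bcont (\<lambda>p. (1 - psi d p) * \<bar>f p\<bar>)"
proof -
  obtain B where B: "\<And>p. \<bar>f p\<bar> \<le> B" using f unfolding bcont_def bounded_real by blast
  have c: "continuous_on UNIV (\<lambda>p. (1 - psi d p) * \<bar>f p\<bar>)"
    using f psi_cont[OF d] unfolding bcont_def
    by (intro continuous_on_mult continuous_on_diff continuous_on_const continuous_on_rabs) auto
  have "\<bar>(1 - psi d p) * \<bar>f p\<bar>\<bar> \<le> 1 * B" for p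
  proof -
    have "\<bar>(1 - psi d p) * \<bar>f p\<bar>\<bar> = (1 - psi d p) * \<bar>f p\<bar>"
      using psi_range(1)[OF d, of p] psi_range(2)[of d p] by (simp add: abs_mult)
    also have "\<dots> \<le> 1 * B" using psi_range(1)[OF d, of p] psi_range(2)[of d p] B[of p]
      by (intro mult_mono) auto
    finally show ?thesis .
  qed
  then have "bounded (range (\<lambda>p. (1 - psi d p) * \<bar>f p\<bar>))" unfolding bounded_real by (intro exI[of _ B]) auto
  then show ?thesis using c unfolding bcont_def by blast
qed

lemma diffm: "(\<lambda>p::(real^2)\<times>(real^2). fst p - snd p) \<in> borel_measurable borel"
  by (intro borel_measurable_continuous_onI continuous_on_diff continuous_on_fst continuous_on_snd continuous_on_id)

lemma Qf_bmeas:
  assumes f: "bmeas f" shows "bmeas (Qf f)"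
proof -
  obtain B where B: "\<And>p. \<bar>f p\<bar> \<le> B" using f unfolding bmeas_def by blast
  have "(\<lambda>p. Q (fst p - snd p)) \<in> borel_measurable borel"
    by (rule measurable_compose[OF diffm Q_meas])
  then have "Qf f \<in> borel_measurable borel" using f unfolding bmeas_def Qf_def by (intro borel_measurable_times) auto
  moreover have "\<bar>Qf f p\<bar> \<le> Qb * B" for p unfolding Qf_def
    using B[of p] Qb_bound[of "fst p - snd p"] by (simp add: abs_mult mult_mono')
  ultimately show ?thesis by (rule bmeasI)
qed

lemma Qf_eq: "(\<lambda>(x, y). Q (x - y) * f (x, y)) = Qf f"
  unfolding Qf_def by (rule ext) (simp add: case_prod_beta)

end



lemma ev_one:
  fixes v :: "'a::real_normed_vector"
  assumes "v \<noteq> 0" shows "eventually (\<lambda>n. min 1 (norm v / (1 / real (Suc n))) = 1) sequentially"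
proof -
  have nv: "0 < norm v" using assms by simp
  obtain N :: nat where N: "1 / norm v < real N" using reals_Archimedean2 by blast
  have "min 1 (norm v / (1 / real (Suc n))) = 1" if "N \<le> n" for n
  proof -
    have "1 / norm v < real (Suc n)" using N that by linarith
    then have "1 < norm v * real (Suc n)" using nv by (simp add: field_simps)
    then show ?thesis by simp
  qed
  then show ?thesis unfolding eventually_sequentially by blast
qed

context setting begin

lemma limG: "(\<lambda>n. Wd (1 / real (Suc n)) (fst p - snd p) * f p) \<longlonglongrightarrow> Qf f p * indicator (-diag) p"
proof (cases "fst p = snd p")
  case True
  then have e1: "(\<lambda>n. Wd (1 / real (Suc n)) (fst p - snd p) * f p) = (\<lambda>n. 0)" unfolding Wd_def by (simp add: fun_eq_iff)
  have e2: "Qf f p * indicator (-diag) p = 0" using True by (simp add: diag_def indicator_def)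
  show ?thesis unfolding e1 e2 by (rule tendsto_const)
next
  case False
  have "eventually (\<lambda>n. Wd (1 / real (Suc n)) (fst p - snd p) * f p = Qf f p * indicator (-diag) p) sequentially"
    using ev_one[of "fst p - snd p"] False
    by (auto simp: Wd_def Qf_def diag_def elim!: eventually_mono)
  then show ?thesis by (rule tendsto_eventually)
qed

lemma limh: "(\<lambda>n. (1 - psi (1 / real (Suc n)) p) * \<bar>f p\<bar>) \<longlonglongrightarrow> \<bar>f p\<bar> * indicator diag p"
proof (cases "fst p = snd p")
  case True
  then have e: "(\<lambda>n. (1 - psi (1 / real (Suc n)) p) * \<bar>f p\<bar>) = (\<lambda>n. \<bar>f p\<bar> * indicator diag p)"
    unfolding psi_def by (simp add: diag_def indicator_def fun_eq_iff)
  show ?thesis unfolding e by (rule tendsto_const)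
next
  case False
  have "eventually (\<lambda>n. (1 - psi (1 / real (Suc n)) p) * \<bar>f p\<bar> = \<bar>f p\<bar> * indicator diag p) sequentially"
    using ev_one[of "fst p - snd p"] False
    by (auto simp: psi_def diag_def elim!: eventually_mono)
  then show ?thesis by (rule tendsto_eventually)
qed

lemma step1:
  assumes f: "bcont f" and d: "0 < d"
  shows "\<bar>sint m f - I2 (-1) (fst \<mu>) (snd \<mu>) (\<lambda>p. Wd d (fst p - snd p) * f p)\<bar>
     \<le> Qb * I2 1 \<nu>d \<nu>a (\<lambda>p. (1 - psi d p) * \<bar>f p\<bar>)"
proof -
  define G where "G = (\<lambda>p. Wd d (fst p - snd p) * f p)"
  define h where "h = (\<lambda>p. (1 - psi d p) * \<bar>f p\<bar>)"
  have Gc: "bcont G" unfolding G_def by (rule G_bcont[OF f d])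
  have hc: "bcont h" unfolding h_def by (rule h_bcont[OF f d])
  have fb: "bmeas f" by (rule bcont_bmeas[OF f])
  have Qfb: "bmeas (Qf f)" by (rule Qf_bmeas[OF fb])
  have Gb: "bmeas G" by (rule bcont_bmeas[OF Gc])
  have hb: "bmeas h" by (rule bcont_bmeas[OF hc])
  have A: "(\<lambda>N. I2 (-1) (fst (\<mu>s N)) (snd (\<mu>s N)) (Qf f)) \<longlonglongrightarrow> sint m f"
    using mconv[OF f] unfolding Qf_eq sint2_I2 .
  have B: "(\<lambda>N. I2 (-1) (fst (\<mu>s N)) (snd (\<mu>s N)) G) \<longlonglongrightarrow> I2 (-1) (fst \<mu>) (snd \<mu>) G"
    by (rule PC1[OF Gc])
  have C: "(\<lambda>N. Qb * I2 1 (fst (\<mu>s N)) (snd (\<mu>s N)) h) \<longlonglongrightarrow> Qb * I2 1 \<nu>d \<nu>a h"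
    by (intro tendsto_mult tendsto_const PC2[OF hc])
  have pw: "\<bar>Qf f p - G p\<bar> \<le> Qb * h p" for p
  proof -
    have "Qf f p - G p = Q (fst p - snd p) * ((1 - psi d p) * f p)"
      unfolding Qf_def G_def Wd_def psi_def by (simp add: algebra_simps)
    then have "\<bar>Qf f p - G p\<bar> = \<bar>Q (fst p - snd p)\<bar> * ((1 - psi d p) * \<bar>f p\<bar>)"
      using psi_range(2)[of d p] by (simp add: abs_mult)
    also have "\<dots> \<le> Qb * ((1 - psi d p) * \<bar>f p\<bar>)"
      using psi_range(2)[of d p] Qb_bound[of "fst p - snd p"] by (intro mult_right_mono) auto
    finally show ?thesis unfolding h_def .
  qed
  have E: "\<bar>I2 (-1) (fst (\<mu>s N)) (snd (\<mu>s N)) (Qf f) - I2 (-1) (fst (\<mu>s N)) (snd (\<mu>s N)) G\<bar>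
      \<le> Qb * I2 1 (fst (\<mu>s N)) (snd (\<mu>s N)) h" for N
  proof -
    have "\<bar>I2 (-1) (fst (\<mu>s N)) (snd (\<mu>s N)) (Qf f) - I2 (-1) (fst (\<mu>s N)) (snd (\<mu>s N)) G\<bar>
       = \<bar>I2 (-1) (fst (\<mu>s N)) (snd (\<mu>s N)) (\<lambda>p. Qf f p - G p)\<bar>"
      by (simp add: I2_diff[OF fPN fMN Qfb Gb])
    also have "\<dots> \<le> I2 1 (fst (\<mu>s N)) (snd (\<mu>s N)) (\<lambda>p. Qb * h p)"
      by (rule I2_abs_le[OF fPN fMN _ bmeas_diff[OF Qfb Gb] bmeas_mult[OF bmeas_const hb] pw]) simp
    also have "\<dots> = Qb * I2 1 (fst (\<mu>s N)) (snd (\<mu>s N)) h" by (rule I2_cmult)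
    finally show ?thesis .
  qed
  have L: "(\<lambda>N. \<bar>I2 (-1) (fst (\<mu>s N)) (snd (\<mu>s N)) (Qf f) - I2 (-1) (fst (\<mu>s N)) (snd (\<mu>s N)) G\<bar>)
      \<longlonglongrightarrow> \<bar>sint m f - I2 (-1) (fst \<mu>) (snd \<mu>) G\<bar>"
    by (intro tendsto_rabs tendsto_diff A B)
  have "\<bar>sint m f - I2 (-1) (fst \<mu>) (snd \<mu>) G\<bar> \<le> Qb * I2 1 \<nu>d \<nu>a h"
    by (rule LIMSEQ_le[OF L C]) (use E in blast)
  then show ?thesis unfolding G_def h_def .
qed

lemma offdiag_int:
  fixes X Y :: "(real^2) measure"
  assumes X: "fmeas X" and Y: "fmeas Y" and n: "emeasure (X \<Otimes>\<^sub>M Y) diag = 0" and g: "bmeas g"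
  shows "integral\<^sup>L (X \<Otimes>\<^sub>M Y) (\<lambda>p. g p * indicator (-diag) p) = integral\<^sup>L (X \<Otimes>\<^sub>M Y) g"
proof (rule integral_cong_AE)
  have XY: "fmeas (X \<Otimes>\<^sub>M Y)" by (rule fmeas_pair[OF X Y])
  have db: "-(diag :: ((real^2)\<times>(real^2)) set) \<in> sets borel" by (rule borel_comp[OF diag_borel])
  show "(\<lambda>p. g p * indicator (-diag) p) \<in> borel_measurable (X \<Otimes>\<^sub>M Y)"
    using bmeas_mult[OF g bmeas_indicator[OF db]] XY unfolding bmeas_def by (blast intro: fmeas_meas)
  show "g \<in> borel_measurable (X \<Otimes>\<^sub>M Y)" using g XY unfolding bmeas_def by (blast intro: fmeas_meas)
  have "diag \<in> null_sets (X \<Otimes>\<^sub>M Y)" using n fmeas_sets[OF XY diag_borel] by (intro null_setsI) auto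
  then show "AE p in X \<Otimes>\<^sub>M Y. g p * indicator (-diag) p = g p"
    by (rule AE_I') (auto simp: indicator_def)
qed

lemma mu_offdiag:
  assumes g: "bmeas g"
  shows "I2 s (fst \<mu>) (snd \<mu>) (\<lambda>p. g p * indicator (-diag) p) = I2 s (fst \<mu>) (snd \<mu>) g"
proof -
  have na: "\<And>x. emeasure (fst \<mu>) {x} = 0" "\<And>x. emeasure (snd \<mu>) {x} = 0"
    using mu_na unfolding s_nonatomic_def by auto
  show ?thesis unfolding I2_def
    by (simp add: offdiag_int[OF fP fP diag_null1[OF fP fP na(1)] g] offdiag_int[OF fP fM diag_null1[OF fP fM na(2)] g]
        offdiag_int[OF fM fP diag_null1[OF fM fP na(1)] g] offdiag_int[OF fM fM diag_null1[OF fM fM na(2)] g])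
qed

lemma key:
  assumes f: "bcont f"
  shows "\<bar>sint m f - I2 (-1) (fst \<mu>) (snd \<mu>) (Qf f)\<bar> \<le> Qb * I2 1 \<nu>d \<nu>a (\<lambda>p. \<bar>f p\<bar> * indicator diag p)"
proof -
  obtain B where B: "\<And>p. \<bar>f p\<bar> \<le> B" using f unfolding bcont_def bounded_real by blast
  have fb: "bmeas f" by (rule bcont_bmeas[OF f])
  have dpos: "0 < 1 / real (Suc n)" for n by simp
  have db: "-(diag :: ((real^2)\<times>(real^2)) set) \<in> sets borel" by (rule borel_comp[OF diag_borel])
  have lim1: "(\<lambda>n. I2 (-1) (fst \<mu>) (snd \<mu>) (\<lambda>p. Wd (1 / real (Suc n)) (fst p - snd p) * f p))
     \<longlonglongrightarrow> I2 (-1) (fst \<mu>) (snd \<mu>) (\<lambda>p. Qf f p * indicator (-diag) p)"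
  proof (rule dconv_I2[OF fP fM])
    show "(\<lambda>p. Wd (1 / real (Suc n)) (fst p - snd p) * f p) \<in> borel_measurable borel" for n
      using bcont_bmeas[OF G_bcont[OF f dpos]] unfolding bmeas_def by blast
    show "(\<lambda>p. Qf f p * indicator (-diag) p) \<in> borel_measurable borel"
      using bmeas_mult[OF Qf_bmeas[OF fb] bmeas_indicator[OF db]] unfolding bmeas_def by blast
    show "\<bar>Wd (1 / real (Suc n)) (fst p - snd p) * f p\<bar> \<le> Qb * B" for n p
    proof -
      have m0: "0 \<le> min 1 (norm (fst p - snd p) / (1 / real (Suc n)))" "min 1 (norm (fst p - snd p) / (1 / real (Suc n))) \<le> 1" by auto
      have "\<bar>Wd (1 / real (Suc n)) (fst p - snd p)\<bar> \<le> Qb * 1" unfolding Wd_def abs_mult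
        using m0 Qb_bound[of "fst p - snd p"] by (intro mult_mono) auto
      then show ?thesis using B[of p] Qb_nonneg by (simp add: abs_mult mult_mono)
    qed
    show "(\<lambda>n. Wd (1 / real (Suc n)) (fst p - snd p) * f p) \<longlonglongrightarrow> Qf f p * indicator (-diag) p" for p
      by (rule limG)
  qed
  have lim2: "(\<lambda>n. Qb * I2 1 \<nu>d \<nu>a (\<lambda>p. (1 - psi (1 / real (Suc n)) p) * \<bar>f p\<bar>))
     \<longlonglongrightarrow> Qb * I2 1 \<nu>d \<nu>a (\<lambda>p. \<bar>f p\<bar> * indicator diag p)"
  proof (rule tendsto_mult[OF tendsto_const], rule dconv_I2[OF fnud fnua])
    show "(\<lambda>p. (1 - psi (1 / real (Suc n)) p) * \<bar>f p\<bar>) \<in> borel_measurable borel" for n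
      using bcont_bmeas[OF h_bcont[OF f dpos]] unfolding bmeas_def by blast
    show "(\<lambda>p. \<bar>f p\<bar> * indicator diag p) \<in> borel_measurable borel"
      using bmeas_mult[OF bmeas_abs[OF fb] bmeas_indicator[OF diag_borel]] unfolding bmeas_def by blast
    show "\<bar>(1 - psi (1 / real (Suc n)) p) * \<bar>f p\<bar>\<bar> \<le> B" for n p
    proof -
      have "\<bar>(1 - psi (1 / real (Suc n)) p) * \<bar>f p\<bar>\<bar> = (1 - psi (1 / real (Suc n)) p) * \<bar>f p\<bar>"
        using psi_range(2)[of "1 / real (Suc n)" p] by (simp add: abs_mult)
      also have "\<dots> \<le> 1 * B" using psi_range(1)[OF dpos, of n p] psi_range(2)[of "1 / real (Suc n)" p] B[of p]
        by (intro mult_mono) auto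
      finally show ?thesis by simp
    qed
    show "(\<lambda>n. (1 - psi (1 / real (Suc n)) p) * \<bar>f p\<bar>) \<longlonglongrightarrow> \<bar>f p\<bar> * indicator diag p" for p
      by (rule limh)
  qed
  have L: "(\<lambda>n. \<bar>sint m f - I2 (-1) (fst \<mu>) (snd \<mu>) (\<lambda>p. Wd (1 / real (Suc n)) (fst p - snd p) * f p)\<bar>)
     \<longlonglongrightarrow> \<bar>sint m f - I2 (-1) (fst \<mu>) (snd \<mu>) (\<lambda>p. Qf f p * indicator (-diag) p)\<bar>"
    by (intro tendsto_rabs tendsto_diff tendsto_const lim1)
  have "\<bar>sint m f - I2 (-1) (fst \<mu>) (snd \<mu>) (\<lambda>p. Qf f p * indicator (-diag) p)\<bar>
      \<le> Qb * I2 1 \<nu>d \<nu>a (\<lambda>p. \<bar>f p\<bar> * indicator diag p)"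
    by (rule LIMSEQ_le[OF L lim2]) (use step1[OF f dpos] in blast)
  then show ?thesis using mu_offdiag[OF Qf_bmeas[OF fb]] by simp
qed

end



lemma inner_reg1:
  fixes X :: "'a::{second_countable_topology, complete_space} measure"
  assumes X: "fmeas X" and A: "A \<in> sets borel" and e: "0 < e"
  shows "\<exists>K. compact K \<and> K \<subseteq> A \<and> measure X (A - K) < e"
proof (cases "measure X A < e")
  case True then show ?thesis by (intro exI[of _ "{}"]) auto
next
  case False
  interpret finite_measure X using X by (simp add: fmeas_def)
  have sX: "sets X = sets borel" using X by (simp add: fmeas_def)
  have fin: "emeasure X (space X) \<noteq> \<infinity>" by simp
  have reg: "emeasure X A = (SUP K \<in> {K. K \<subseteq> A \<and> compact K}. emeasure X K)"
    by (rule inner_regular[OF sX fin A])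
  have "ennreal (measure X A - e) < ennreal (measure X A)"
    using False e by (subst ennreal_less_iff) auto
  also have "\<dots> = emeasure X A" by (simp add: emeasure_eq_measure)
  finally obtain K where K: "K \<subseteq> A" "compact K" "ennreal (measure X A - e) < emeasure X K"
    unfolding reg less_SUP_iff by blast
  then have "measure X A - e < measure X K"
    using False e by (subst (asm) emeasure_eq_measure) (subst (asm) ennreal_less_iff, auto)
  moreover have Kb: "K \<in> sets X" using K(2) sX by (simp add: borel_closed compact_imp_closed)
  moreover have "A \<in> sets X" using A sX by simp
  ultimately have "measure X (A - K) < e" using finite_measure_Diff[of A K] K(1) by simp
  then show ?thesis using K by blast
qed

lemma inner_reg_list:
  fixes L :: "'a::{second_countable_topology, complete_space} measure list"
  assumes L: "\<forall>X\<in>set L. fmeas X" and A: "A \<in> sets borel" and e: "0 < e"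
  shows "\<exists>K. compact K \<and> K \<subseteq> A \<and> (\<forall>X\<in>set L. measure X (A - K) < e)"
  using L
proof (induction L)
  case Nil then show ?case by (intro exI[of _ "{}"]) auto
next
  case (Cons X L)
  then obtain K1 where K1: "compact K1" "K1 \<subseteq> A" "\<forall>Y\<in>set L. measure Y (A - K1) < e" by auto
  obtain K2 where K2: "compact K2" "K2 \<subseteq> A" "measure X (A - K2) < e"
    using inner_reg1[of X A e] Cons.prems A e by auto
  have Ab: "A - K \<in> sets borel" if "compact K" for K
    by (rule sets.Diff[OF A borel_closed[OF compact_imp_closed[OF that]]])
  have "\<forall>Y\<in>set (X # L). measure Y (A - (K1 \<union> K2)) < e"
  proof
    fix Y assume Y: "Y \<in> set (X # L)"
    then have fY: "fmeas Y" using Cons.prems by auto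
    show "measure Y (A - (K1 \<union> K2)) < e"
    proof (cases "Y = X")
      case True
      have "measure Y (A - (K1 \<union> K2)) \<le> measure Y (A - K2)"
        by (rule fmeas_mono[OF fY _ Ab[OF K2(1)]]) auto
      then show ?thesis using K2(3) True by simp
    next
      case False
      then have "Y \<in> set L" using Y by simp
      have "measure Y (A - (K1 \<union> K2)) \<le> measure Y (A - K1)"
        by (rule fmeas_mono[OF fY _ Ab[OF K1(1)]]) auto
      then show ?thesis using K1(3) \<open>Y \<in> set L\<close> by fastforce
    qed
  qed
  moreover have "compact (K1 \<union> K2)" using K1 K2 by auto
  moreover have "K1 \<union> K2 \<subseteq> A" using K1 K2 by auto
  ultimately show ?case by blast
qed

context setting begin

definition "D A = smeas m A - I2 (-1) (fst \<mu>) (snd \<mu>) (Qf (indicator A))"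
definition "jm B = I2 1 \<nu>d \<nu>a (indicator B)"

lemma I2_ind:
  fixes P M :: "(real^2) measure"
  assumes P: "fmeas P" and M: "fmeas M"
  shows "I2 s P M (indicator B) = measure (P \<Otimes>\<^sub>M P) B + s * measure (P \<Otimes>\<^sub>M M) B + s * measure (M \<Otimes>\<^sub>M P) B + measure (M \<Otimes>\<^sub>M M) B"
  unfolding I2_def int_ind_fm[OF fmeas_pair[OF P P]] int_ind_fm[OF fmeas_pair[OF P M]]
      int_ind_fm[OF fmeas_pair[OF M P]] int_ind_fm[OF fmeas_pair[OF M M]] ..

lemma keyF:
  assumes S: "closed S"
  shows "\<bar>D S\<bar> \<le> Qb * jm (S \<inter> diag)"
proof -
  have Sb: "S \<in> sets borel" using S by (rule borel_closed)
  have ab: "bmeas (appr S n)" for n by (rule bcont_bmeas[OF appr_bcont])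
  have am: "appr S n \<in> borel_measurable borel" for n using ab unfolding bmeas_def by blast
  have ib: "bmeas (indicator S :: _ \<Rightarrow> real)" by (rule bmeas_indicator[OF Sb])
  have abs_appr: "\<bar>appr S n p\<bar> = appr S n p" for n p using appr_range(1)[of S n p] by simp
  have lim1: "(\<lambda>n. sint m (appr S n)) \<longlonglongrightarrow> smeas m S"
  proof -
    have "(\<lambda>n. I (-1) (fst m) (snd m) (appr S n)) \<longlonglongrightarrow> I (-1) (fst m) (snd m) (indicator S)"
    proof (rule dconv_I[OF fPm fMm am])
      show "indicator S \<in> borel_measurable borel" using Sb by simp
      show "\<bar>appr S n p\<bar> \<le> 1" for n p using appr_range[of S n p] by simp
      show "(\<lambda>n. appr S n p) \<longlonglongrightarrow> indicator S p" for p by (rule appr_lim[OF S])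
    qed
    moreover have "I (-1) (fst m) (snd m) (indicator S) = smeas m S"
      unfolding I_def smeas_def int_ind_fm[OF fPm] int_ind_fm[OF fMm] by simp
    ultimately show ?thesis unfolding sint_I by simp
  qed
  have lim2: "(\<lambda>n. I2 (-1) (fst \<mu>) (snd \<mu>) (Qf (appr S n))) \<longlonglongrightarrow> I2 (-1) (fst \<mu>) (snd \<mu>) (Qf (indicator S))"
  proof (rule dconv_I2[OF fP fM])
    show "Qf (appr S n) \<in> borel_measurable borel" for n using Qf_bmeas[OF ab] unfolding bmeas_def by blast
    show "Qf (indicator S) \<in> borel_measurable borel" using Qf_bmeas[OF ib] unfolding bmeas_def by blast
    show "\<bar>Qf (appr S n) p\<bar> \<le> Qb * 1" for n p unfolding Qf_def abs_mult
      using appr_range[of S n p] Qb_bound[of "fst p - snd p"] by (intro mult_mono) auto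
    show "(\<lambda>n. Qf (appr S n) p) \<longlonglongrightarrow> Qf (indicator S) p" for p
      unfolding Qf_def by (intro tendsto_mult tendsto_const appr_lim[OF S])
  qed
  have lim3: "(\<lambda>n. Qb * I2 1 \<nu>d \<nu>a (\<lambda>p. \<bar>appr S n p\<bar> * indicator diag p)) \<longlonglongrightarrow> Qb * jm (S \<inter> diag)"
    unfolding jm_def
  proof (rule tendsto_mult[OF tendsto_const], rule dconv_I2[OF fnud fnua])
    show "(\<lambda>p. \<bar>appr S n p\<bar> * indicator diag p) \<in> borel_measurable borel" for n
      using bmeas_mult[OF bmeas_abs[OF ab] bmeas_indicator[OF diag_borel]] unfolding bmeas_def by blast
    show "(indicator (S \<inter> diag) :: _ \<Rightarrow> real) \<in> borel_measurable borel"
      using bmeas_indicator[OF sets.Int[OF Sb diag_borel]] unfolding bmeas_def by blast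
    show "\<bar>\<bar>appr S n p\<bar> * indicator diag p\<bar> \<le> 1" for n p
      using appr_range[of S n p] by (simp add: indicator_def)
    show "(\<lambda>n. \<bar>appr S n p\<bar> * indicator diag p) \<longlonglongrightarrow> indicator (S \<inter> diag) p" for p
      unfolding abs_appr indicator_inter_arith by (intro tendsto_mult tendsto_const appr_lim[OF S])
  qed
  have L: "(\<lambda>n. \<bar>sint m (appr S n) - I2 (-1) (fst \<mu>) (snd \<mu>) (Qf (appr S n))\<bar>) \<longlonglongrightarrow> \<bar>D S\<bar>"
    unfolding D_def by (intro tendsto_rabs tendsto_diff lim1 lim2)
  show ?thesis
    by (rule LIMSEQ_le[OF L lim3]) (use key[OF appr_bcont] in blast)
qed

lemma D_add:
  assumes A: "A \<in> sets borel" and K: "K \<in> sets borel" and KA: "K \<subseteq> A"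
  shows "D A = D K + D (A - K)"
proof -
  have AK: "A - K \<in> sets borel" using A K by auto
  have ms: "measure X (A - K) = measure X A - measure X K" if X: "fmeas X" for X :: "((real^2) \<times> (real^2)) measure"
    using finite_measure.finite_measure_Diff[of X A K] X A K KA unfolding fmeas_def by simp
  have ind: "Qf (indicator A) = (\<lambda>p. Qf (indicator K) p + Qf (indicator (A - K)) p)"
    unfolding Qf_def using KA by (auto simp: fun_eq_iff indicator_def)
  have "I2 (-1) (fst \<mu>) (snd \<mu>) (Qf (indicator A)) =
      I2 (-1) (fst \<mu>) (snd \<mu>) (Qf (indicator K)) + I2 (-1) (fst \<mu>) (snd \<mu>) (Qf (indicator (A - K)))"
    unfolding ind by (rule I2_add[OF fP fM Qf_bmeas[OF bmeas_indicator[OF K]] Qf_bmeas[OF bmeas_indicator[OF AK]]])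
  then show ?thesis unfolding D_def smeas_def using ms[OF fPm] ms[OF fMm] by simp
qed

lemma D_small:
  assumes B: "B \<in> sets borel"
  shows "\<bar>D B\<bar> \<le> measure (fst m) B + measure (snd m) B + Qb * (measure (fst \<mu> \<Otimes>\<^sub>M fst \<mu>) B
     + measure (fst \<mu> \<Otimes>\<^sub>M snd \<mu>) B + measure (snd \<mu> \<Otimes>\<^sub>M fst \<mu>) B + measure (snd \<mu> \<Otimes>\<^sub>M snd \<mu>) B)"
proof -
  have ib: "bmeas (indicator B :: _ \<Rightarrow> real)" by (rule bmeas_indicator[OF B])
  have "\<bar>I2 (-1) (fst \<mu>) (snd \<mu>) (Qf (indicator B))\<bar> \<le> I2 1 (fst \<mu>) (snd \<mu>) (\<lambda>p. Qb * indicator B p)"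
  proof (rule I2_abs_le[OF fP fM _ Qf_bmeas[OF ib] bmeas_mult[OF bmeas_const ib]])
    show "\<bar>Qf (indicator B) p\<bar> \<le> Qb * indicator B p" for p unfolding Qf_def abs_mult
      using Qb_bound[of "fst p - snd p"] by (auto simp: indicator_def)
  qed simp
  also have "\<dots> = Qb * (measure (fst \<mu> \<Otimes>\<^sub>M fst \<mu>) B
     + measure (fst \<mu> \<Otimes>\<^sub>M snd \<mu>) B + measure (snd \<mu> \<Otimes>\<^sub>M fst \<mu>) B + measure (snd \<mu> \<Otimes>\<^sub>M snd \<mu>) B)"
    unfolding I2_cmult I2_ind[OF fP fM] by simp
  finally have "\<bar>I2 (-1) (fst \<mu>) (snd \<mu>) (Qf (indicator B))\<bar> \<le> \<dots>" .
  moreover have "\<bar>smeas m B\<bar> \<le> measure (fst m) B + measure (snd m) B"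
    unfolding smeas_def using measure_nonneg[of "fst m" B] measure_nonneg[of "snd m" B] by linarith
  ultimately show ?thesis unfolding D_def by linarith
qed

lemma jm_mono:
  assumes "K \<subseteq> A" "A \<in> sets borel"
  shows "jm (K \<inter> diag) \<le> jm (A \<inter> diag)"
proof -
  have Ab: "A \<inter> diag \<in> sets borel" using assms diag_borel by auto
  have sub: "K \<inter> diag \<subseteq> A \<inter> diag" using assms by auto
  show ?thesis unfolding jm_def I2_ind[OF fnud fnua]
    using fmeas_mono[OF fmeas_pair[OF fnud fnud] sub Ab] fmeas_mono[OF fmeas_pair[OF fnud fnua] sub Ab]
      fmeas_mono[OF fmeas_pair[OF fnua fnud] sub Ab] fmeas_mono[OF fmeas_pair[OF fnua fnua] sub Ab]
    by simp
qed

lemma keyB: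
  assumes A: "A \<in> sets borel"
  shows "\<bar>D A\<bar> \<le> Qb * jm (A \<inter> diag)"
proof (rule field_le_epsilon)
  fix e :: real assume e: "0 < e"
  define e' where "e' = e / (2 + 4 * Qb)"
  have e': "0 < e'" unfolding e'_def using e Qb_nonneg by simp
  have ee: "(2 + 4 * Qb) * e' = e" unfolding e'_def using Qb_nonneg by simp
  define L where "L = [fst m, snd m, fst \<mu> \<Otimes>\<^sub>M fst \<mu>, fst \<mu> \<Otimes>\<^sub>M snd \<mu>, snd \<mu> \<Otimes>\<^sub>M fst \<mu>, snd \<mu> \<Otimes>\<^sub>M snd \<mu>]"
  have L: "\<forall>X\<in>set L. fmeas X" unfolding L_def
    using fPm fMm fmeas_pair[OF fP fP] fmeas_pair[OF fP fM] fmeas_pair[OF fM fP] fmeas_pair[OF fM fM] by simp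
  obtain K where K: "compact K" "K \<subseteq> A" "\<forall>X\<in>set L. measure X (A - K) < e'"
    using inner_reg_list[OF L A e'] by blast
  have Kb: "K \<in> sets borel" using K(1) by (simp add: borel_closed compact_imp_closed)
  have AK: "A - K \<in> sets borel" using A Kb by auto
  have "\<bar>D A\<bar> \<le> \<bar>D K\<bar> + \<bar>D (A - K)\<bar>" using D_add[OF A Kb K(2)] by simp
  also have "\<bar>D K\<bar> \<le> Qb * jm (A \<inter> diag)"
  proof -
    have "\<bar>D K\<bar> \<le> Qb * jm (K \<inter> diag)" by (rule keyF[OF compact_imp_closed[OF K(1)]])
    also have "\<dots> \<le> Qb * jm (A \<inter> diag)" by (intro mult_left_mono jm_mono K(2) A Qb_nonneg)
    finally show ?thesis .
  qed
  also have "\<bar>D (A - K)\<bar> \<le> e' + e' + Qb * (e' + e' + e' + e')"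
  proof -
    have "\<bar>D (A - K)\<bar> \<le> measure (fst m) (A - K) + measure (snd m) (A - K) + Qb * (measure (fst \<mu> \<Otimes>\<^sub>M fst \<mu>) (A - K)
     + measure (fst \<mu> \<Otimes>\<^sub>M snd \<mu>) (A - K) + measure (snd \<mu> \<Otimes>\<^sub>M fst \<mu>) (A - K) + measure (snd \<mu> \<Otimes>\<^sub>M snd \<mu>) (A - K))"
      by (rule D_small[OF AK])
    also have "\<dots> \<le> e' + e' + Qb * (e' + e' + e' + e')"
      using K(3) unfolding L_def by (intro add_mono mult_left_mono Qb_nonneg) auto
    finally show ?thesis .
  qed
  finally show "\<bar>D A\<bar> \<le> Qb * jm (A \<inter> diag) + e" using ee by (simp add: algebra_simps)
qed

end



lemma meas_times:
  fixes X Y :: "'a::second_countable_topology measure"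
  assumes X: "fmeas X" and Y: "fmeas Y" and A: "A \<in> sets borel" and B: "B \<in> sets borel"
  shows "measure (X \<Otimes>\<^sub>M Y) (A \<times> B) = measure X A * measure Y B"
proof -
  interpret Y: finite_measure Y using Y by (simp add: fmeas_def)
  interpret X: finite_measure X using X by (simp add: fmeas_def)
  have "emeasure (X \<Otimes>\<^sub>M Y) (A \<times> B) = emeasure X A * emeasure Y B"
    using A B X Y by (intro Y.emeasure_pair_measure_Times) (simp_all add: fmeas_sets)
  also have "\<dots> = ennreal (measure X A * measure Y B)"
    by (simp add: X.emeasure_eq_measure Y.emeasure_eq_measure ennreal_mult)
  finally show ?thesis by (simp add: measure_def)
qed

lemma fmeas_zero:
  assumes X: "fmeas X" and n: "emeasure X B = 0" and C: "C \<subseteq> B" "B \<in> sets borel"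
  shows "measure X C = 0"
proof -
  have "measure X C \<le> measure X B" by (rule fmeas_mono[OF X C])
  moreover have "measure X B = 0" using n by (simp add: measure_def)
  ultimately show ?thesis using measure_nonneg[of X C] by linarith
qed

context setting begin

definition "T n = (\<lambda>j. (z j, z j)) ` {..<n}"
definition "ST = range (\<lambda>j. (z j, z j))"

lemma T_borel: "T n \<in> sets borel"
  unfolding T_def by (intro borel_closed finite_imp_closed) auto

lemma ST_borel: "ST \<in> sets borel"
  unfolding ST_def by (rule sets.countable) auto

lemma jm_ind: "B \<in> sets borel \<Longrightarrow> jm B = measure (\<nu>d \<Otimes>\<^sub>M \<nu>d) B + measure (\<nu>d \<Otimes>\<^sub>M \<nu>a) B + measure (\<nu>a \<Otimes>\<^sub>M \<nu>d) B + measure (\<nu>a \<Otimes>\<^sub>M \<nu>a) B"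
  unfolding jm_def I2_ind[OF fnud fnua] by simp

lemma jm_mono2:
  assumes "B \<subseteq> C" "C \<in> sets borel" shows "jm B \<le> jm C"
  unfolding jm_def I2_ind[OF fnud fnua]
  using fmeas_mono[OF fmeas_pair[OF fnud fnud] assms] fmeas_mono[OF fmeas_pair[OF fnud fnua] assms]
    fmeas_mono[OF fmeas_pair[OF fnua fnud] assms] fmeas_mono[OF fmeas_pair[OF fnua fnua] assms]
  by simp

lemma jm_atom: "jm ({(z j, z j)} \<inter> diag) = (\<gamma> j)^2"
proof -
  have e: "{(z j, z j)} \<inter> diag = {z j} \<times> {z j}" by (auto simp: diag_def)
  have zb: "{z j} \<in> sets borel" by simp
  have d0: "measure \<nu>d {z j} = 0" using nud(3)[of "z j"] by (simp add: measure_def)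
  have zz: "{z j} \<times> {z j} \<in> sets borel" by simp
  show ?thesis unfolding e jm_ind[OF zz] meas_times[OF fnud fnud zb zb] meas_times[OF fnud fnua zb zb]
      meas_times[OF fnua fnud zb zb] meas_times[OF fnua fnua zb zb] d0 nua_atom'
    by (simp add: power2_eq_square)
qed

lemma diagST_null: "measure X (diag - ST) = 0" if "X \<in> {\<nu>d \<Otimes>\<^sub>M \<nu>d, \<nu>d \<Otimes>\<^sub>M \<nu>a, \<nu>a \<Otimes>\<^sub>M \<nu>d, \<nu>a \<Otimes>\<^sub>M \<nu>a}" for X
proof -
  have sub: "diag - ST \<subseteq> diag" by auto
  have dST: "diag - ST \<in> sets borel" using diag_borel ST_borel by auto
  have "measure (\<nu>d \<Otimes>\<^sub>M \<nu>d) (diag - ST) = 0"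
    by (rule fmeas_zero[OF fmeas_pair[OF fnud fnud] diag_null1[OF fnud fnud nud(3)] sub diag_borel])
  moreover have "measure (\<nu>d \<Otimes>\<^sub>M \<nu>a) (diag - ST) = 0"
    by (rule fmeas_zero[OF fmeas_pair[OF fnud fnua] diag_null2[OF fnud fnua nud(3)] sub diag_borel])
  moreover have "measure (\<nu>a \<Otimes>\<^sub>M \<nu>d) (diag - ST) = 0"
    by (rule fmeas_zero[OF fmeas_pair[OF fnua fnud] diag_null1[OF fnua fnud nud(3)] sub diag_borel])
  moreover have "measure (\<nu>a \<Otimes>\<^sub>M \<nu>a) (diag - ST) = 0"
  proof -
    interpret fa: finite_measure \<nu>a using fnua by (simp add: fmeas_def)
    have s: "diag - ST \<in> sets (\<nu>a \<Otimes>\<^sub>M \<nu>a)" using fmeas_sets[OF fmeas_pair[OF fnua fnua] dST] .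
    have nrz: "- range z \<in> sets \<nu>a" using fmeas_sets[OF fnua] rz_borel by auto
    have "emeasure (\<nu>a \<Otimes>\<^sub>M \<nu>a) (diag - ST) = (\<integral>\<^sup>+x. emeasure \<nu>a (Pair x -` (diag - ST)) \<partial>\<nu>a)"
      by (rule fa.emeasure_pair_measure_alt[OF s])
    also have "\<dots> = (\<integral>\<^sup>+x. 0 \<partial>\<nu>a)"
    proof (rule nn_integral_cong)
      fix x :: "real^2"
      have "Pair x -` (diag - ST) \<subseteq> - range z" unfolding diag_def ST_def by auto
      then have "emeasure \<nu>a (Pair x -` (diag - ST)) \<le> emeasure \<nu>a (- range z)"
        by (rule emeasure_mono[OF _ nrz])
      then show "emeasure \<nu>a (Pair x -` (diag - ST)) = 0" using nua_null by simp
    qed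
    finally show ?thesis by (simp add: measure_def)
  qed
  ultimately show ?thesis using that by auto
qed

lemma jm_tail: "(\<lambda>n. jm (diag - T n)) \<longlonglongrightarrow> 0"
proof -
  have dec: "decseq (\<lambda>n. diag - T n)" unfolding decseq_def T_def by auto
  have rng: "range (\<lambda>n. diag - T n) \<subseteq> sets X" if "fmeas X" for X :: "((real^2) \<times> (real^2)) measure"
    using fmeas_sets[OF that] diag_borel T_borel by auto
  have int: "(\<Inter>n. diag - T n) = diag - ST" unfolding T_def ST_def by auto
  have lim: "(\<lambda>n. measure X (diag - T n)) \<longlonglongrightarrow> 0"
    if X: "X \<in> {\<nu>d \<Otimes>\<^sub>M \<nu>d, \<nu>d \<Otimes>\<^sub>M \<nu>a, \<nu>a \<Otimes>\<^sub>M \<nu>d, \<nu>a \<Otimes>\<^sub>M \<nu>a}" for X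
  proof -
    have fX: "fmeas X" using X fmeas_pair[OF fnud fnud] fmeas_pair[OF fnud fnua]
      fmeas_pair[OF fnua fnud] fmeas_pair[OF fnua fnua] by auto
    interpret finite_measure X using fX by (simp add: fmeas_def)
    have "(\<lambda>n. measure X (diag - T n)) \<longlonglongrightarrow> measure X (\<Inter>n. diag - T n)"
      by (rule finite_Lim_measure_decseq[OF rng[OF fX] dec])
    then show ?thesis unfolding int diagST_null[OF X] .
  qed
  have "jm (diag - T n) = measure (\<nu>d \<Otimes>\<^sub>M \<nu>d) (diag - T n) + measure (\<nu>d \<Otimes>\<^sub>M \<nu>a) (diag - T n)
     + measure (\<nu>a \<Otimes>\<^sub>M \<nu>d) (diag - T n) + measure (\<nu>a \<Otimes>\<^sub>M \<nu>a) (diag - T n)" for n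
    by (rule jm_ind) (use diag_borel T_borel in auto)
  then have "(\<lambda>n. jm (diag - T n)) = (\<lambda>n. measure (\<nu>d \<Otimes>\<^sub>M \<nu>d) (diag - T n) + measure (\<nu>d \<Otimes>\<^sub>M \<nu>a) (diag - T n)
     + measure (\<nu>a \<Otimes>\<^sub>M \<nu>d) (diag - T n) + measure (\<nu>a \<Otimes>\<^sub>M \<nu>a) (diag - T n))" by (rule ext)
  moreover have "(\<lambda>n. measure (\<nu>d \<Otimes>\<^sub>M \<nu>d) (diag - T n) + measure (\<nu>d \<Otimes>\<^sub>M \<nu>a) (diag - T n)
     + measure (\<nu>a \<Otimes>\<^sub>M \<nu>d) (diag - T n) + measure (\<nu>a \<Otimes>\<^sub>M \<nu>a) (diag - T n)) \<longlonglongrightarrow> 0 + 0 + 0 + 0"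
    by (intro tendsto_add lim) auto
  ultimately show ?thesis by simp
qed

end



context setting begin

definition "c j = D {(z j, z j)}"

lemma D_empty: "D {} = 0"
  unfolding D_def smeas_def Qf_def I2_def by simp

lemma D_fin:
  assumes A: "A \<in> sets borel"
  shows "D A = D (A - T n) + (\<Sum>j<n. c j * indicator A (z j, z j))"
proof (induction n)
  case 0 then show ?case by (simp add: T_def)
next
  case (Suc n)
  define K where "K = (A - T n) \<inter> {(z n, z n)}"
  have ATn: "A - T n \<in> sets borel" using A T_borel by auto
  have Kb: "K \<in> sets borel" unfolding K_def using ATn by auto
  have KA: "K \<subseteq> A - T n" unfolding K_def by auto
  have TS: "T (Suc n) = insert (z n, z n) (T n)" unfolding T_def by (simp add: lessThan_Suc)
  have rest: "A - T n - K = A - T (Suc n)" unfolding K_def TS by auto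
  have nT: "(z n, z n) \<notin> T n" unfolding T_def using z_inj by (auto simp: inj_def)
  have DK: "D K = c n * indicator A (z n, z n)"
  proof (cases "(z n, z n) \<in> A")
    case True
    then have "K = {(z n, z n)}" unfolding K_def using nT by auto
    then show ?thesis using True unfolding c_def by simp
  next
    case False
    then have "K = {}" unfolding K_def by auto
    then show ?thesis using False D_empty by simp
  qed
  have "D (A - T n) = D K + D (A - T (Suc n))"
    using D_add[OF ATn Kb KA] unfolding rest .
  then show ?case using Suc.IH DK by simp
qed

lemma D_tail: "(\<lambda>n. D (A - T n)) \<longlonglongrightarrow> 0" if A: "A \<in> sets borel"
proof (rule Lim_null_comparison)
  show "\<forall>\<^sub>F n in sequentially. norm (D (A - T n)) \<le> Qb * jm (diag - T n)"
  proof (rule always_eventually, rule allI)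
    fix n
    have ATn: "A - T n \<in> sets borel" using A T_borel by auto
    have "\<bar>D (A - T n)\<bar> \<le> Qb * jm ((A - T n) \<inter> diag)" by (rule keyB[OF ATn])
    also have "\<dots> \<le> Qb * jm (diag - T n)"
      by (intro mult_left_mono Qb_nonneg jm_mono2) (use diag_borel T_borel in auto)
    finally show "norm (D (A - T n)) \<le> Qb * jm (diag - T n)" by simp
  qed
  show "(\<lambda>n. Qb * jm (diag - T n)) \<longlonglongrightarrow> 0"
    using tendsto_mult[OF tendsto_const[of Qb] jm_tail] by simp
qed

lemma repr:
  assumes A: "A \<in> sets borel"
  shows "smeas m A = sint2 \<mu> (\<lambda>(x, y). Q (x - y) * indicator A (x, y)) + (\<Sum>j. c j * indicator A (z j, z j))"
proof -
  have "(\<lambda>n. \<Sum>j<n. c j * indicator A (z j, z j)) \<longlonglongrightarrow> D A - 0"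
  proof -
    have "(\<lambda>n. \<Sum>j<n. c j * indicator A (z j, z j)) = (\<lambda>n. D A - D (A - T n))"
      using D_fin[OF A] by (auto simp: fun_eq_iff algebra_simps)
    then show ?thesis by (simp only:) (intro tendsto_diff tendsto_const D_tail[OF A])
  qed
  then have "(\<lambda>j. c j * indicator A (z j, z j)) sums D A" unfolding sums_def by simp
  then have "(\<Sum>j. c j * indicator A (z j, z j)) = D A" by (rule sums_unique[symmetric])
  then show ?thesis unfolding D_def sint2_I2 Qf_eq by simp
qed

lemma cbound: "\<bar>c j\<bar> \<le> Qb * \<bar>\<gamma> j\<bar>\<^sup>2"
proof -
  have "\<bar>c j\<bar> \<le> Qb * jm ({(z j, z j)} \<inter> diag)" unfolding c_def by (rule keyB) simp
  then show ?thesis unfolding jm_atom by simp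
qed

lemma null_int: "(\<And>A. emeasure X A = 0) \<Longrightarrow> integral\<^sup>L X f = (0::real)"
proof (rule integral_eq_zero_AE)
  assume n: "\<And>A. emeasure X A = 0"
  have "space X \<in> null_sets X" using n by (intro null_setsI) auto
  then show "AE x in X. f x = 0" by (rule AE_I') auto
qed

lemma gamma_zero:
  assumes pos: "\<forall>N A. emeasure (snd (\<mu>s N)) A = 0"
  shows "\<gamma> j = 0"
proof -
  have same: "sint \<mu> f = I 1 \<nu>d \<nu>a f" if f: "bcont f" for f
  proof -
    have "sint (\<mu>s N) f = I 1 (fst (\<mu>s N)) (snd (\<mu>s N)) f" for N
      unfolding sint_def I_def using null_int[of "snd (\<mu>s N)" f] pos by simp
    then have "(\<lambda>N. sint (\<mu>s N) f) \<longlonglongrightarrow> I 1 \<nu>d \<nu>a f" using vconv'[OF f] by simp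
    then show ?thesis using conv[OF f] LIMSEQ_unique by blast
  qed
  define S where "S = {z j}"
  have S: "closed S" unfolding S_def by simp
  have Sb: "S \<in> sets borel" using S by (rule borel_closed)
  have am: "appr S n \<in> borel_measurable borel" for n using bcont_bmeas[OF appr_bcont] unfolding bmeas_def by blast
  have im: "(indicator S :: _ \<Rightarrow> real) \<in> borel_measurable borel" using Sb by simp
  have bd: "\<bar>appr S n p\<bar> \<le> 1" for n p using appr_range[of S n p] by simp
  have l1: "(\<lambda>n. I (-1) (fst \<mu>) (snd \<mu>) (appr S n)) \<longlonglongrightarrow> I (-1) (fst \<mu>) (snd \<mu>) (indicator S)"
    by (rule dconv_I[OF fP fM am im bd appr_lim[OF S]])
  have l2: "(\<lambda>n. I 1 \<nu>d \<nu>a (appr S n)) \<longlonglongrightarrow> I 1 \<nu>d \<nu>a (indicator S)"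
    by (rule dconv_I[OF fnud fnua am im bd appr_lim[OF S]])
  have "I (-1) (fst \<mu>) (snd \<mu>) (appr S n) = I 1 \<nu>d \<nu>a (appr S n)" for n
    using same[OF appr_bcont] unfolding sint_I .
  then have "I (-1) (fst \<mu>) (snd \<mu>) (indicator S) = I 1 \<nu>d \<nu>a (indicator S)"
    using l1 l2 LIMSEQ_unique by auto
  moreover have "I (-1) (fst \<mu>) (snd \<mu>) (indicator S) = 0"
  proof -
    have "measure (fst \<mu>) S = 0" "measure (snd \<mu>) S = 0"
      using mu_na unfolding s_nonatomic_def S_def by (auto simp: measure_def)
    then show ?thesis unfolding I_def int_ind_fm[OF fP] int_ind_fm[OF fM] by simp
  qed
  moreover have "I 1 \<nu>d \<nu>a (indicator S) = \<gamma> j"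
  proof -
    have "measure \<nu>d S = 0" using nud(3) unfolding S_def by (simp add: measure_def)
    then show ?thesis unfolding I_def int_ind_fm[OF fnud] int_ind_fm[OF fnua] S_def by (simp add: nua_atom')
  qed
  ultimately show ?thesis by simp
qed

lemma main:
  shows "(\<exists>c :: nat \<Rightarrow> real.
            (\<forall>j. \<bar>c j\<bar> \<le> Qnorm Q * \<bar>\<gamma> j\<bar>\<^sup>2) \<and>
            (\<forall>A\<in>sets borel. smeas m A =
               sint2 \<mu> (\<lambda>(x, y). Q (x - y) * indicator A (x, y))
               + (\<Sum>j. c j * indicator A (z j, z j))))
       \<and> ((\<forall>N A. emeasure (snd (\<mu>s N)) A = 0) \<longrightarrow>
            (\<forall>A\<in>sets borel. smeas m A =
               sint2 \<mu> (\<lambda>(x, y). Q (x - y) * indicator A (x, y))))"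
proof (intro conjI impI ballI)
  show "\<exists>c :: nat \<Rightarrow> real.
            (\<forall>j. \<bar>c j\<bar> \<le> Qnorm Q * \<bar>\<gamma> j\<bar>\<^sup>2) \<and>
            (\<forall>A\<in>sets borel. smeas m A =
               sint2 \<mu> (\<lambda>(x, y). Q (x - y) * indicator A (x, y))
               + (\<Sum>j. c j * indicator A (z j, z j)))"
    using cbound repr by blast
next
  fix A :: "((real^2) \<times> (real^2)) set"
  assume pos: "\<forall>N A. emeasure (snd (\<mu>s N)) A = 0" and A: "A \<in> sets borel"
  have "c j = 0" for j using cbound[of j] gamma_zero[OF pos, of j] by simp
  then show "smeas m A = sint2 \<mu> (\<lambda>(x, y). Q (x - y) * indicator A (x, y))"
    using repr[OF A] by simp
qed

end

theorem lemma6p3: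
  fixes \<mu>s :: "nat \<Rightarrow> (real^2) measure \<times> (real^2) measure"
    and \<mu> :: "(real^2) measure \<times> (real^2) measure"
    and \<nu>d :: "(real^2) measure"
    and \<gamma> :: "nat \<Rightarrow> real" and z :: "nat \<Rightarrow> real^2"
    and Q :: "real^2 \<Rightarrow> real"
    and m :: "((real^2) \<times> (real^2)) measure \<times> ((real^2) \<times> (real^2)) measure"
  assumes mus: "\<And>N. signed_meas (\<mu>s N)"
    and mu: "signed_meas \<mu>" and mu_na: "s_nonatomic \<mu>"
    and conv: "\<And>f. bcont f \<Longrightarrow> (\<lambda>N. sint (\<mu>s N) f) \<longlonglongrightarrow> sint \<mu> f"
    and nud: "finite_measure \<nu>d" "sets \<nu>d = sets borel" "\<And>x. emeasure \<nu>d {x} = 0"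
    and gamma: "\<And>j. \<gamma> j \<ge> 0" "summable \<gamma>" and z_inj: "inj z"
    and vconv: "\<And>f. bcont f \<Longrightarrow>
        (\<lambda>N. var_int (\<mu>s N) f) \<longlonglongrightarrow> (\<integral>x. f x \<partial>\<nu>d) + (\<Sum>j. \<gamma> j * f (z j))"
    and Qcont: "continuous_on (-{0}) Q" and Qbdd: "bounded (Q ` (-{0}))"
    and Q0: "\<bar>Q 0\<bar> \<le> Qnorm Q"
    and m: "signed_meas m"
    and mconv: "\<And>f. bcont f \<Longrightarrow>
        (\<lambda>N. sint2 (\<mu>s N) (\<lambda>(x, y). Q (x - y) * f (x, y))) \<longlonglongrightarrow> sint m f"
  shows "(\<exists>c :: nat \<Rightarrow> real.
            (\<forall>j. \<bar>c j\<bar> \<le> Qnorm Q * \<bar>\<gamma> j\<bar>\<^sup>2) \<and>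
            (\<forall>A\<in>sets borel. smeas m A =
               sint2 \<mu> (\<lambda>(x, y). Q (x - y) * indicator A (x, y))
               + (\<Sum>j. c j * indicator A (z j, z j))))
       \<and> ((\<forall>N A. emeasure (snd (\<mu>s N)) A = 0) \<longrightarrow>
            (\<forall>A\<in>sets borel. smeas m A =
               sint2 \<mu> (\<lambda>(x, y). Q (x - y) * indicator A (x, y))))"
proof -
  interpret setting \<mu>s \<mu> \<nu>d \<gamma> z Q m
    by (rule setting.intro[OF mus mu mu_na conv nud(1) nud(2) nud(3) gamma(1) gamma(2) z_inj vconv
        Qcont Qbdd Q0 m mconv])
  show ?thesis by (rule main)
qed

end
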